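(* (i) $u_2u_1s_2^{-1}s_1s_2^{-1}\subset u_1\omega^{-2}+R_5s_2^{-2}s_1^2s_2^{-1}s_1s_2^{-1}+u_1u_2u_1u_2u_1\subset U''$. (ii) $u_2u_1s_2s_1^{-1}s_2\subset u_1\omega^{2}+R_5s_2^{2}s_1^{-2}s_2s_1^{-1}s_2+u_1u_2u_1u_2u_1\subset U''$.
   Context: Let $B_3=\langle s_1,s_2\mid s_1s_2s_1=s_2s_1s_2\rangle$, $R_5=\mathbb{Z}[a,b,c,d,e,e^{-1}]$, and let $H_5$ be the quotient of the group algebra $R_5B_3$ by the relations $s_i^5=as_i^4+bs_i^3+cs_i^2+ds_i+e$ for $i=1,2$; identify $s_i$ with their images. For $i=1,2$ let $u_i$ be the $R_5$-subalgebra of $H_5$ generated by $s_i$. Set $\omega=s_2s_1^2s_2$. For $R_5$-submodules (or elements) $X_1,\dots,X_n$, $X_1\cdots X_n$ denotes the $R_5$-submodule spanned by products $x_1\cdots x_n$, $x_j\in X_j$; sums are sums of submodules; $R_5x$ is the submodule spanned by $x$. Define $U'=u_1u_2u_1+u_1\omega+u_1\omega^{-1}+u_1s_2^{-1}s_1^2s_2^{-1}u_1+u_1s_2s_1^{-2}s_2u_1+u_1s_2^2s_1^2s_2^2u_1+u_1s_2^{-2}s_1^{-2}s_2^{-2}u_1+u_1s_2s_1^{-2}s_2^2u_1+u_1s_2^{-1}s_1^2s_2^{-2}u_1+u_1s_2^{-1}s_1s_2^{-1}u_1+u_1s_2s_1^{-1}s_2u_1+u_1s_2^{-2}s_1^{-2}s_2^2u_1+u_1s_2^2s_1^2s_2^{-2}u_1+u_1s_2^2s_1^{-2}s_2^2u_1+u_1s_2^{-2}s_1^2s_2^{-2}u_1+u_1s_2^{-2}s_1s_2^{-1}u_1+u_1s_2^{-1}s_1s_2^{-2}u_1$;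 $U''=U'+u_1\omega^2+u_1\omega^{-2}+u_1s_2^{-2}s_1^2s_2^{-1}s_1s_2^{-1}u_1+u_1s_2^2s_1^{-2}s_2s_1^{-1}s_2u_1+u_1s_2s_1^{-2}s_2^2s_1^{-2}s_2^2u_1+u_1s_2^{-1}s_1^2s_2^{-2}s_1^2s_2^{-2}u_1$. *)

theory Defs
  imports Complex_Main
begin

definition is_algebra :: "('r::comm_ring_1 \<Rightarrow> 'a::ring_1 \<Rightarrow> 'a) \<Rightarrow> bool" where
  "is_algebra sc \<longleftrightarrow> module sc \<and>
     (\<forall>r x y. sc r (x * y) = sc r x * y \<and> sc r (x * y) = x * sc r y)"

definition mprod :: "('r::comm_ring_1 \<Rightarrow> 'a::ring_1 \<Rightarrow> 'a) \<Rightarrow> 'a set \<Rightarrow> 'a set \<Rightarrow> 'a set" where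
  "mprod sc X Y = module.span sc {x * y | x y. x \<in> X \<and> y \<in> Y}"

definition msum :: "'a::ring_1 set \<Rightarrow> 'a set \<Rightarrow> 'a set" where
  "msum X Y = {x + y | x y. x \<in> X \<and> y \<in> Y}"

definition ugen :: "('r::comm_ring_1 \<Rightarrow> 'a::ring_1 \<Rightarrow> 'a) \<Rightarrow> 'a \<Rightarrow> 'a set" where
  "ugen sc s = module.span sc (range (\<lambda>n::nat. s ^ n))"

definition sand :: "('r::comm_ring_1 \<Rightarrow> 'a::ring_1 \<Rightarrow> 'a) \<Rightarrow> 'a set \<Rightarrow> 'a \<Rightarrow> 'a set \<Rightarrow> 'a set" where
  "sand sc X x Y = mprod sc (mprod sc X {x}) Y"

definition H5_setting :: "('r::comm_ring_1 \<Rightarrow> 'a::ring_1 \<Rightarrow> 'a) \<Rightarrow> 'r \<Rightarrow> 'r \<Rightarrow> 'r \<Rightarrow> 'r \<Rightarrow> 'r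
    \<Rightarrow> 'a \<Rightarrow> 'a \<Rightarrow> 'a \<Rightarrow> 'a \<Rightarrow> bool" where
  "H5_setting sc a b c d e s1 s2 t1 t2 \<longleftrightarrow> is_algebra sc \<and>
     (\<exists>e'. e * e' = 1) \<and>
     s1 * t1 = 1 \<and> t1 * s1 = 1 \<and> s2 * t2 = 1 \<and> t2 * s2 = 1 \<and>
     s1 * s2 * s1 = s2 * s1 * s2 \<and>
     (\<forall>s\<in>{s1, s2}. s ^ 5 = sc a (s ^ 4) + sc b (s ^ 3) + sc c (s ^ 2) + sc d s + sc e 1)"

definition Uprime :: "('r::comm_ring_1 \<Rightarrow> 'a::ring_1 \<Rightarrow> 'a) \<Rightarrow> 'a \<Rightarrow> 'a \<Rightarrow> 'a \<Rightarrow> 'a \<Rightarrow> 'a set" where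
  "Uprime sc s1 s2 t1 t2 =
    (let u1 = ugen sc s1; u2 = ugen sc s2;
         w = s2 * s1^2 * s2; wi = t2 * t1^2 * t2;
         f = (\<lambda>x. sand sc u1 x u1)
     in foldr msum
       [ mprod sc (mprod sc u1 u2) u1,
         mprod sc u1 {w},
         mprod sc u1 {wi},
         f (t2 * s1^2 * t2),
         f (s2 * t1^2 * s2),
         f (s2^2 * s1^2 * s2^2),
         f (t2^2 * t1^2 * t2^2),
         f (s2 * t1^2 * s2^2),
         f (t2 * s1^2 * t2^2),
         f (t2 * s1 * t2),
         f (s2 * t1 * s2),
         f (t2^2 * t1^2 * s2^2),
         f (s2^2 * s1^2 * t2^2),
         f (s2^2 * t1^2 * s2^2),
         f (t2^2 * s1^2 * t2^2),
         f (t2^2 * s1 * t2),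
         f (t2 * s1 * t2^2) ] {0})"

definition Udprime :: "('r::comm_ring_1 \<Rightarrow> 'a::ring_1 \<Rightarrow> 'a) \<Rightarrow> 'a \<Rightarrow> 'a \<Rightarrow> 'a \<Rightarrow> 'a \<Rightarrow> 'a set" where
  "Udprime sc s1 s2 t1 t2 =
    (let u1 = ugen sc s1;
         w = s2 * s1^2 * s2; wi = t2 * t1^2 * t2;
         f = (\<lambda>x. sand sc u1 x u1)
     in foldr msum
       [ Uprime sc s1 s2 t1 t2,
         mprod sc u1 {w^2},
         mprod sc u1 {wi^2},
         f (t2^2 * s1^2 * t2 * s1 * t2),
         f (s2^2 * t1^2 * s2 * t1 * s2),
         f (s2 * t1^2 * s2^2 * t1^2 * s2^2),
         f (t2 * s1^2 * t2^2 * s1^2 * t2^2) ] {0})"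

end

theory Submission imports Defs begin

definition pw :: "int \<Rightarrow> int \<Rightarrow> int list" where
 "pw g n = (if 0 \<le> n then replicate (nat n) g else replicate (nat (-n)) (-g))"
definition ph :: "int \<Rightarrow> int" where
 "ph x = (if x=1 then 2 else if x=2 then 1 else if x=-1 then -2 else if x=-2 then -1 else x)"
definition push :: "int \<times> int list \<Rightarrow> int \<Rightarrow> int \<times> int list" where
 "push s a = (case s of (k,R) \<Rightarrow> (case a#R of x#y#z#r \<Rightarrow>
     if x = z \<and> x \<noteq> y \<and> x \<in> {1,2} \<and> y \<in> {1,2} then (k+1, map ph r) else (k, a#R)
   | _ \<Rightarrow> (k, a#R)))"
definition stp :: "int \<times> int list \<Rightarrow> int \<Rightarrow> int \<times> int list" where
 "stp s x = (if x = 1 \<or> x = 2 then push s x else if x = -1 \<or> x = -2 then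
    (case s of (k,R) \<Rightarrow> push (push (k-1, map ph R) (-x)) (3+x)) else s)"
definition nf :: "int list \<Rightarrow> int \<times> int list" where "nf w = foldl stp (0,[]) w"

datatype cert = CB "int list" | CL "int list" int int "int list" int cert cert cert cert cert

fun chk :: "(int list \<Rightarrow> bool) \<Rightarrow> int list \<Rightarrow> cert \<Rightarrow> bool" where
  "chk bas w (CB w') = (bas w' \<and> nf w = nf w')"
| "chk bas w (CL u g n v m c0 c1 c2 c3 c4) = ((g = 1 \<or> g = 2) \<and> nf w = nf (u @ pw g n @ v)
     \<and> chk bas (u @ pw g m @ v) c0 \<and> chk bas (u @ pw g (m+1) @ v) c1 \<and> chk bas (u @ pw g (m+2) @ v) c2
     \<and> chk bas (u @ pw g (m+3) @ v) c3 \<and> chk bas (u @ pw g (m+4) @ v) c4)"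

definition one :: "int \<Rightarrow> bool" where "one x = (x = 1 \<or> x = -1)"
definition two :: "int \<Rightarrow> bool" where "two x = (x = 2 \<or> x = -2)"
definition mid :: "int list \<Rightarrow> int list" where "mid w = rev (dropWhile one (rev (dropWhile one w)))"
fun pat :: "nat \<Rightarrow> int list \<Rightarrow> bool" where
  "pat 0 w = list_all one w"
| "pat (Suc k) w = pat k (dropWhile two (dropWhile one w))"

lemma mid_split: "\<exists>p s. w = p @ mid w @ s \<and> list_all one p \<and> list_all one s"
proof -
  let ?w1 = "dropWhile one w"
  have 1: "w = takeWhile one w @ ?w1" by simp
  have 2: "?w1 = rev (dropWhile one (rev ?w1)) @ rev (takeWhile one (rev ?w1))"
    by (metis rev_append rev_rev_ident takeWhile_dropWhile_id)
  have "w = takeWhile one w @ mid w @ rev (takeWhile one (rev ?w1))"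
    using 1 2 unfolding mid_def by (metis append_assoc)
  moreover have "list_all one (takeWhile one w)" by (simp add: list_all_iff) (meson set_takeWhileD)
  moreover have "list_all one (rev (takeWhile one (rev ?w1)))" by (simp add: list_all_iff) (meson set_takeWhileD)
  ultimately show ?thesis by blast
qed

lemma pat2_split: "pat 2 w \<Longrightarrow> \<exists>a1 b1 a2 b2 a3. w = a1 @ b1 @ a2 @ b2 @ a3 \<and> list_all one a1 \<and> list_all two b1
   \<and> list_all one a2 \<and> list_all two b2 \<and> list_all one a3"
proof -
  assume h: "pat 2 w"
  have tw: "\<And>P x. list_all P (takeWhile P x)" by (simp add: list_all_iff) (meson set_takeWhileD)
  let ?x1 = "dropWhile one w" let ?x2 = "dropWhile two ?x1" let ?x3 = "dropWhile one ?x2" let ?x4 = "dropWhile two ?x3"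
  have "pat 0 ?x4" using h by (simp add: numeral_2_eq_2)
  then have "list_all one ?x4" by simp
  moreover have "w = takeWhile one w @ takeWhile two ?x1 @ takeWhile one ?x2 @ takeWhile two ?x3 @ ?x4"
    by simp
  ultimately show ?thesis using tw by blast
qed

definition GU :: "int list list" where "GU = [[2,1,1,2],[-2,-1,-1,-2],[-2,1,1,-2],[2,-1,-1,2],[2,2,1,1,2,2],[-2,-2,-1,-1,-2,-2],
  [2,-1,-1,2,2],[-2,1,1,-2,-2],[-2,1,-2],[2,-1,2],[-2,-2,-1,-1,2,2],[2,2,1,1,-2,-2],[2,2,-1,-1,2,2],[-2,-2,1,1,-2,-2],[-2,-2,1,-2],[-2,1,-2,-2]]"
definition basU :: "int list \<Rightarrow> bool" where "basU w = (mid w \<in> set GU \<or> list_all two (mid w))"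
definition basS :: "int list \<Rightarrow> int list \<Rightarrow> int list \<Rightarrow> bool" where "basS z x w = (pat 2 w \<or> mid w = z \<or> w = x)"

definition tabU :: "((int \<times> int \<times> int) \<times> cert) list" where "tabU = [(((-2), (-2), (-2)), (CB [-2, -2, -1, -1, -2, -2])),
  (((-2), (-2), (-1)), (CL [] 2 (-2) [-1, -1, -2] (-1) (CB [-2, -1, -1, -2]) (CB [-1, -1, -2]) (CB [-1, -2, -2, 1]) (CB [-1, -2, 1, -2, 1]) (CB [-1, -2, 1, 1, -2, 1]))),
  (((-2), (-2), 0), (CB [-2, -2, -1, -1])),
  (((-2), (-2), 1), (CB [-2, 1, -2, -2, -1])),
  (((-2), (-2), 2), (CB [-2, -2, -1, -1, 2, 2])),
  (((-2), (-1), (-2)), (CB [-1, -1, -1, -1, -2, -1, -1, -2, 1, 1, 1])),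
  (((-2), (-1), (-1)), (CB [-1, -2, -1, -1])),
  (((-2), (-1), 0), (CB [-2, -2, -1])),
  (((-2), (-1), 1), (CB [-2, 1, -2, -1])),
  (((-2), (-1), 2), (CB [-2, 1, 1, -2, -1])),
  (((-2), 0, (-2)), (CB [-2, -2, -2, -2])),
  (((-2), 0, (-1)), (CB [-2, -2, -2])),
  (((-2), 0, 0), (CB [-2, -2])),
  (((-2), 0, 1), (CB [-2])),
  (((-2), 0, 2), (CB [])),
  (((-2), 1, (-2)), (CL [-2, -2, -2] 1 (-2) [2, 1] (-1) (CB [-2, -2, 1, -2, -1, 1]) (CB [-2, -2, 1]) (CB [1, 2, -1, -1, -1, 1]) (CB [1, 2, -1, -1, 2, -1, 1]) (CB [1, 2, -1, -1, 2, 2, -1, 1]))),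
  (((-2), 1, (-1)), (CB [-2, -2, 1, -2])),
  (((-2), 1, 0), (CB [-2, -2, 1])),
  (((-2), 1, 1), (CB [1, 2, -1, -1])),
  (((-2), 1, 2), (CB [1, 2, -1, -1, 2])),
  (((-2), 2, (-2)), (CB [-2, -2, 1, 1, -2, -2])),
  (((-2), 2, (-1)), (CL [-2, -2, -2, -1] 2 2 [1] (-3) (CL [] 2 (-3) [-1, -2, -2, -2, 1] (-2) (CL [1] 2 (-2) [-1, -1, -2, -1, -1, 1] (-1) (CB [1, -2, -1, -1, -2, -1, -1, 1]) (CB [1, -1, -1, -2, -1, -1, 1]) (CB [1, -1, -2, -2, 1, -1, -1, 1]) (CB [1, -1, -2, 1, -2, 1, -1, -1, 1]) (CB [1, -1, -2, 1, 1, -2, 1, -1, -1, 1])) (CB [-1, -1, -1, -2, -1, 1]) (CB [-1, -2, -2, -2, 1]) (CB [-1, -2, 1, -2, -2, 1]) (CB [-1, -2, 1, 1, -2, -2, 1])) (CL [] 2 (-2) [-1, -1, -2, -1, 1] (-1) (CB [-2, -1, -1, -2, -1, 1]) (CB [-1, -1, -2, -1, 1]) (CB [-1, -2, -2, 1, -1, 1]) (CB [-1, -2, 1, -2, 1, -1, 1]) (CB [-1, -2, 1, 1, -2, 1, -1, 1])) (CB [-1, -2, -1, -1, -1, 1]) (CB [-2, -2, -2, -1, 1]) (CB [-2, -2, 1, -2, -1, 1]))),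
  (((-2), 2, 0), (CB [-2, -2, 1, 1])),
  (((-2), 2, 1), (CB [1, 2, -1, 2, -1])),
  (((-2), 2, 2), (CB [1, 2, 2, 1, 1, -2, -2, -1])),
  (((-1), (-2), (-2)), (CL [1, 1] 2 (-2) [-1, -1, -2, -1, -1] (-1) (CB [1, 1, -2, -1, -1, -2, -1, -1]) (CB [1, 1, -1, -1, -2, -1, -1]) (CB [1, 1, -1, -2, -2, 1, -1, -1]) (CB [1, 1, -1, -2, 1, -2, 1, -1, -1]) (CB [1, 1, -1, -2, 1, 1, -2, 1, -1, -1]))),
  (((-1), (-2), (-1)), (CB [-2, -1, -1, -2])),
  (((-1), (-2), 0), (CB [-2, -1, -1])),
  (((-1), (-2), 1), (CB [1, -2, -2, -1])),
  (((-1), (-2), 2), (CB [1, -2, 1, -2, -1])),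
  (((-1), (-1), (-2)), (CB [-1, -1, -2, -1])),
  (((-1), (-1), (-1)), (CB [-1, -2, -1])),
  (((-1), (-1), 0), (CB [-2, -1])),
  (((-1), (-1), 1), (CB [1, -2, -1])),
  (((-1), (-1), 2), (CB [1, 1, -2, -1])),
  (((-1), 0, (-2)), (CB [-2, -2, -2])),
  (((-1), 0, (-1)), (CB [-2, -2])),
  (((-1), 0, 0), (CB [-2])),
  (((-1), 0, 1), (CB [])),
  (((-1), 0, 2), (CB [2])),
  (((-1), 1, (-2)), (CB [-2, 1, -2, -2])),
  (((-1), 1, (-1)), (CB [-2, 1, -2])),
  (((-1), 1, 0), (CB [-2, 1])),
  (((-1), 1, 1), (CB [1, 2, -1])),
  (((-1), 1, 2), (CB [1, 2, -1, 2])),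
  (((-1), 2, (-2)), (CB [-2, 1, 1, -2, -2])),
  (((-1), 2, (-1)), (CB [-2, 1, 1, -2])),
  (((-1), 2, 0), (CB [-2, 1, 1])),
  (((-1), 2, 1), (CB [1, 2, 2, -1])),
  (((-1), 2, 2), (CL [1] 2 2 [-1, 2] (-3) (CB [1, -2, -2, 1, -2, -1]) (CB [1, -2, 1, -2, -1]) (CB [1, 1, -2, -1]) (CB [1, -1, 2]) (CB [1, 2, -1, 2]))),
  ((0, (-2), (-2)), (CB [-1, -1, -2, -2])),
  ((0, (-2), (-1)), (CB [-1, -1, -2])),
  ((0, (-2), 0), (CB [-1, -1, -1, -1, 1, 1])),
  ((0, (-2), 1), (CB [-1, -1, 2])),
  ((0, (-2), 2), (CB [-1, -1, 2, 2])),
  ((0, (-1), (-2)), (CB [-1, -2, -2])),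
  ((0, (-1), (-1)), (CB [-1, -2])),
  ((0, (-1), 0), (CB [-1, -1, -1, -1, 1, 1, 1])),
  ((0, (-1), 1), (CB [-1, 2])),
  ((0, (-1), 2), (CB [-1, 2, 2])),
  ((0, 0, (-2)), (CB [-2, -2])),
  ((0, 0, (-1)), (CB [-2])),
  ((0, 0, 0), (CB [])),
  ((0, 0, 1), (CB [2])),
  ((0, 0, 2), (CB [2, 2])),
  ((0, 1, (-2)), (CB [1, -2, -2])),
  ((0, 1, (-1)), (CB [1, -2])),
  ((0, 1, 0), (CB [-1, -1, -1, 1, 1, 1, 1])),
  ((0, 1, 1), (CB [1, 2])),
  ((0, 1, 2), (CB [1, 2, 2])),
  ((0, 2, (-2)), (CB [1, 1, -2, -2])),
  ((0, 2, (-1)), (CB [1, 1, -2])),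
  ((0, 2, 0), (CB [-1, -1, 1, 1, 1, 1])),
  ((0, 2, 1), (CB [1, 1, 2])),
  ((0, 2, 2), (CB [1, 1, 2, 2])),
  ((1, (-2), (-2)), (CB [-1, -2, -2, 1, -2])),
  ((1, (-2), (-1)), (CB [-1, -2, -2, 1])),
  ((1, (-2), 0), (CB [2, -1, -1])),
  ((1, (-2), 1), (CB [2, -1, -1, 2])),
  ((1, (-2), 2), (CB [2, -1, -1, 2, 2])),
  ((1, (-1), (-2)), (CB [-1, -2, 1, -2])),
  ((1, (-1), (-1)), (CB [-1, -2, 1])),
  ((1, (-1), 0), (CB [2, -1])),
  ((1, (-1), 1), (CB [2, -1, 2])),
  ((1, (-1), 2), (CL [] 2 2 [1, 1, -2, -1] (-3) (CL [-2, -2, -2] 1 2 [-2, -1] (-3) (CL [] 2 (-4) [-1, -2, -2, -2, 1, -1] (-2) (CL [1] 2 (-2) [-1, -1, -2, -1, -1, 1, -1] (-1) (CB [1, -2, -1, -1, -2, -1, -1, 1, -1]) (CB [1, -1, -1, -2, -1, -1, 1, -1]) (CB [1, -1, -2, -2, 1, -1, -1, 1, -1]) (CB [1, -1, -2, 1, -2, 1, -1, -1, 1, -1]) (CB [1, -1, -2, 1, 1, -2, 1, -1, -1, 1, -1])) (CB [-1, -1, -1, -2, -1, 1, -1]) (CB [-1, -2, -2, -2, 1, -1]) (CB [-1, -2, 1, -2, -2, 1, -1]) (CB [-1, -2, 1, 1, -2, -2, 1, -1])) (CL [] 2 (-3) [-1, -1, -2, -1] (-1) (CB [-2, -1, -1,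 -2, -1]) (CB [-1, -1, -2, -1]) (CB [-1, -2, -2, 1, -1]) (CB [-1, -2, 1, -2, 1, -1]) (CB [-1, -2, 1, 1, -2, 1, -1])) (CB [-1, -2, -1, -1, -1, -1]) (CB [-2, -2, -2, -2, -1]) (CL [] 2 (-4) [-1, 2, 1, -1] (-3) (CB [-2, -2, 1, -2, -1, 1, -1]) (CB [-2, 1, -2, -1, 1, -1]) (CB [1, -2, -1, 1, -1]) (CB [-1, 2, 1, -1]) (CB [2, -1, 2, 1, -1]))) (CL [-2, -2, -2, -1] 2 2 [1, -1] (-3) (CL [] 2 (-3) [-1, -2, -2, -2, 1, -1] (-2) (CL [1] 2 (-2) [-1, -1, -2, -1, -1, 1, -1] (-1) (CB [1, -2, -1, -1, -2, -1, -1, 1, -1]) (CB [1, -1, -1, -2, -1, -1, 1, -1]) (CB [1, -1, -2, -2, 1, -1, -1, 1, -1]) (CB [1, -1, -2, 1, -2, 1, -1, -1, 1, -1]) (CB [1, -1, -2, 1, 1, -2, 1, -1, -1, 1, -1])) (CB [-1, -1, -1, -2, -1, 1, -1]) (CB [-1, -2, -2, -2, 1, -1]) (CB [-1, -2, 1, -2, -2, 1, -1]) (CB [-1, -2, 1, 1, -2, -2, 1, -1])) (CL [] 2 (-2) [-1, -1, -2, -1, 1, -1] (-1) (CB [-2, -1, -1, -2, -1, 1, -1]) (CB [-1, -1, -2, -1, 1, -1]) (CB [-1, -2, -2, 1, -1, 1, -1]) (CB [-1, -2, 1, -2, 1, -1, 1, -1]) (CB [-1, -2, 1, 1, -2, 1,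 -1, 1, -1])) (CB [-1, -2, -1, -1, -1, 1, -1]) (CB [-2, -2, -2, -1, 1, -1]) (CB [-2, -2, 1, -2, -1, 1, -1])) (CB [-2, 1, 1, -2, -1]) (CB [1, 1, -2, -1]) (CB [-1, 2, 2, 1, -1]))),
  ((1, 0, (-2)), (CB [-2])),
  ((1, 0, (-1)), (CB [])),
  ((1, 0, 0), (CB [2])),
  ((1, 0, 1), (CB [2, 2])),
  ((1, 0, 2), (CB [2, 2, 2])),
  ((1, 1, (-2)), (CB [-1, -1, 2, 1])),
  ((1, 1, (-1)), (CB [-1, 2, 1])),
  ((1, 1, 0), (CB [2, 1])),
  ((1, 1, 1), (CB [1, 2, 1])),
  ((1, 1, 2), (CB [1, 1, 2, 1])),
  ((1, 2, (-2)), (CB [-1, 2, -1, 2, 1])),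
  ((1, 2, (-1)), (CB [-1, 2, 2, 1])),
  ((1, 2, 0), (CB [2, 1, 1])),
  ((1, 2, 1), (CB [2, 1, 1, 2])),
  ((1, 2, 2), (CL [-1, -1] 2 3 [1, 2, 2, 1] (-2) (CB [-1, -1, 1, 2, -1, -1, 2, 1]) (CB [-1, -1, 1, 2, -1, 2, 1]) (CB [-1, -1, 1, 2, 2, 1]) (CB [-1, -1, 1, 1, 2, 1, 1]) (CB [-1, -1, -1, -1, -1, 2, 1, 1, 2, 1, 1, 1, 1, 1]))),
  ((2, (-2), (-2)), (CB [-1, -2, -2, -1, -1, 2, 2, 1])),
  ((2, (-2), (-1)), (CB [-1, -2, 1, -2, 1])),
  ((2, (-2), 0), (CB [2, 2, -1, -1])),
  ((2, (-2), 1), (CL [] 2 2 [-1, -1, 2] (-3) (CL [-2, -2, -2] 1 (-2) [2] (-1) (CB [-2, -2, 1, -2, -1]) (CB [-2, -2]) (CB [1, 2, -1, -1, -1]) (CB [1, 2, -1, -1, 2, -1]) (CB [1, 2, -1, -1, 2, 2, -1])) (CB [-2, 1, -2, -2, -1]) (CB [1, -2, -2, -1]) (CB [-1, -1, 2]) (CB [2, -1, -1, 2]))),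
  ((2, (-2), 2), (CB [2, 2, -1, -1, 2, 2])),
  ((2, (-1), (-2)), (CB [-1, -2, 1, 1, -2])),
  ((2, (-1), (-1)), (CB [-1, -2, 1, 1])),
  ((2, (-1), 0), (CB [2, 2, -1])),
  ((2, (-1), 1), (CL [] 2 2 [-1, 2] (-3) (CB [-2, -2, 1, -2, -1]) (CB [-2, 1, -2, -1]) (CB [1, -2, -1]) (CB [-1, 2]) (CB [2, -1, 2]))),
  ((2, (-1), 2), (CL [] 2 3 [1, 1, -2, -1] (-3) (CL [-2, -2, -2] 1 2 [-2, -1] (-3) (CL [] 2 (-4) [-1, -2, -2, -2, 1, -1] (-2) (CL [1] 2 (-2) [-1, -1, -2, -1, -1, 1, -1] (-1) (CB [1, -2, -1, -1, -2, -1, -1, 1, -1]) (CB [1, -1, -1, -2, -1, -1, 1, -1]) (CB [1, -1, -2, -2, 1, -1, -1, 1, -1]) (CB [1, -1, -2, 1, -2, 1, -1, -1, 1, -1]) (CB [1, -1, -2, 1, 1, -2, 1, -1, -1, 1, -1])) (CB [-1, -1, -1, -2, -1, 1, -1]) (CB [-1, -2, -2, -2, 1, -1]) (CB [-1, -2, 1, -2, -2, 1, -1]) (CB [-1, -2, 1, 1, -2, -2, 1, -1])) (CL [] 2 (-3) [-1, -1, -2, -1] (-1) (CB [-2, -1, -1, -2, -1]) (CB [-1, -1, -2, -1]) (CB [-1, -2, -2, 1, -1]) (CB [-1, -2, 1, -2, 1, -1]) (CB [-1, -2, 1, 1, -2, 1, -1])) (CB [-1, -2, -1, -1, -1, -1])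 (CB [-2, -2, -2, -2, -1]) (CL [] 2 (-4) [-1, 2, 1, -1] (-3) (CB [-2, -2, 1, -2, -1, 1, -1]) (CB [-2, 1, -2, -1, 1, -1]) (CB [1, -2, -1, 1, -1]) (CB [-1, 2, 1, -1]) (CB [2, -1, 2, 1, -1]))) (CL [-2, -2, -2, -1] 2 2 [1, -1] (-3) (CL [] 2 (-3) [-1, -2, -2, -2, 1, -1] (-2) (CL [1] 2 (-2) [-1, -1, -2, -1, -1, 1, -1] (-1) (CB [1, -2, -1, -1, -2, -1, -1, 1, -1]) (CB [1, -1, -1, -2, -1, -1, 1, -1]) (CB [1, -1, -2, -2, 1, -1, -1, 1, -1]) (CB [1, -1, -2, 1, -2, 1, -1, -1, 1, -1]) (CB [1, -1, -2, 1, 1, -2, 1, -1, -1, 1, -1])) (CB [-1, -1, -1, -2, -1, 1, -1]) (CB [-1, -2, -2, -2, 1, -1]) (CB [-1, -2, 1, -2, -2, 1, -1]) (CB [-1, -2, 1, 1, -2, -2, 1, -1])) (CL [] 2 (-2) [-1, -1, -2, -1, 1, -1] (-1) (CB [-2, -1, -1, -2, -1, 1, -1]) (CB [-1, -1, -2, -1, 1, -1]) (CB [-1, -2, -2, 1, -1, 1, -1]) (CB [-1, -2, 1, -2, 1, -1, 1, -1]) (CB [-1, -2, 1, 1, -2, 1, -1, 1, -1])) (CB [-1, -2, -1, -1, -1, 1, -1]) (CB [-2, -2, -2, -1, 1, -1]) (CB [-2, -2, 1, -2, -1, 1, -1])) (CB [-2, 1, 1, -2, -1]) (CB [1, 1,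 -2, -1]) (CB [-1, 2, 2, 1, -1]))),
  ((2, 0, (-2)), (CB [])),
  ((2, 0, (-1)), (CB [2])),
  ((2, 0, 0), (CB [2, 2])),
  ((2, 0, 1), (CB [2, 2, 2])),
  ((2, 0, 2), (CB [2, 2, 2, 2])),
  ((2, 1, (-2)), (CB [2, -1, -1, 2, 1])),
  ((2, 1, (-1)), (CB [2, -1, 2, 1])),
  ((2, 1, 0), (CB [2, 2, 1])),
  ((2, 1, 1), (CB [1, 2, 1, 1])),
  ((2, 1, 2), (CB [-1, -1, -1, 2, 1, 1, 2, 1, 1, 1, 1])),
  ((2, 2, (-2)), (CB [2, 2, 1, 1, -2, -2])),
  ((2, 2, (-1)), (CL [] 2 2 [1, 1, -2] (-3) (CL [-2, -2, -2] 1 2 [-2] (-3) (CL [] 2 (-4) [-1, -2, -2, -2, 1] (-2) (CL [1] 2 (-2) [-1, -1, -2, -1, -1, 1] (-1) (CB [1, -2, -1, -1, -2, -1, -1, 1]) (CB [1, -1, -1, -2, -1, -1, 1]) (CB [1, -1, -2, -2, 1, -1, -1, 1]) (CB [1, -1, -2, 1, -2, 1, -1, -1, 1]) (CB [1, -1, -2, 1, 1, -2, 1, -1, -1, 1])) (CB [-1, -1, -1, -2, -1, 1]) (CB [-1, -2, -2, -2, 1]) (CB [-1, -2, 1, -2, -2, 1]) (CB [-1, -2, 1, 1, -2, -2, 1])) (CL [] 2 (-3) [-1, -1, -2] (-1) (CB [-2, -1, -1, -2]) (CB [-1, -1, -2]) (CB [-1, -2, -2, 1]) (CB [-1, -2,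 1, -2, 1]) (CB [-1, -2, 1, 1, -2, 1])) (CB [-1, -2, -1, -1, -1]) (CB [-2, -2, -2, -2]) (CL [] 2 (-4) [-1, 2, 1] (-3) (CB [-2, -2, 1, -2, -1, 1]) (CB [-2, 1, -2, -1, 1]) (CB [1, -2, -1, 1]) (CB [-1, 2, 1]) (CB [2, -1, 2, 1]))) (CL [-2, -2, -2, -1] 2 2 [1] (-3) (CL [] 2 (-3) [-1, -2, -2, -2, 1] (-2) (CL [1] 2 (-2) [-1, -1, -2, -1, -1, 1] (-1) (CB [1, -2, -1, -1, -2, -1, -1, 1]) (CB [1, -1, -1, -2, -1, -1, 1]) (CB [1, -1, -2, -2, 1, -1, -1, 1]) (CB [1, -1, -2, 1, -2, 1, -1, -1, 1]) (CB [1, -1, -2, 1, 1, -2, 1, -1, -1, 1])) (CB [-1, -1, -1, -2, -1, 1]) (CB [-1, -2, -2, -2, 1]) (CB [-1, -2, 1, -2, -2, 1]) (CB [-1, -2, 1, 1, -2, -2, 1])) (CL [] 2 (-2) [-1, -1, -2, -1, 1] (-1) (CB [-2, -1, -1, -2, -1, 1]) (CB [-1, -1, -2, -1, 1]) (CB [-1, -2, -2, 1, -1, 1]) (CB [-1, -2, 1, -2, 1, -1, 1]) (CB [-1, -2, 1, 1, -2, 1, -1, 1])) (CB [-1, -2, -1, -1, -1, 1]) (CB [-2, -2, -2, -1, 1]) (CB [-2, -2, 1, -2, -1, 1])) (CB [-2, 1, 1, -2]) (CB [1, 1, -2]) (CB [-1, 2, 2, 1]))),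
  ((2, 2, 0), (CB [2, 2, 1, 1])),
  ((2, 2, 1), (CL [] 2 3 [1, 2, 2, -1] (-2) (CB [1, 2, -1, -1, 2, -1]) (CB [1, 2, -1, 2, -1]) (CB [1, 2, 2, -1]) (CB [1, 1, 2, 1, -1]) (CB [-1, -1, -1, 2, 1, 1, 2, 1, 1, 1, 1, -1]))),
  ((2, 2, 2), (CB [2, 2, 1, 1, 2, 2]))]"

definition tabS1 :: "((int \<times> int) \<times> cert) list" where "tabS1 = [(((-2), (-2)), (CL [1] 2 4 [-1, -1, -1, -2, -2, -1, -2, -2, -2, -1] (-1) (CB [1, -1, -1, -1, -1, -2, -1, -1, -2, -2, -1, -1, -2, 1, 1, -1]) (CB [1, -1, -1, -2, -2, -2, -1, -2, -2, -1, -1]) (CB [1, -1, -2, -2, -2, -2, -1, -2, -2, -1]) (CB [1, -1, -2, -2, -2, -1, -2, -2, -2, 1, -1]) (CB [1, -1, -2, -2, -1, -1, -2, -2, 1, -1]))),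
  (((-2), (-1)), (CB [-1, -2, -2, -2, -2, -2, -1, -2, 1, 1, 1, 1])),
  (((-2), 0), (CB [-2, -2, -2, -2, -1, 2, 1])),
  (((-2), 1), (CB [-2, -2, -2, -1, -1, 2, 2, 1])),
  (((-2), 2), (CB [-2, -2, 1, 1, -2, 1, -2])),
  (((-1), (-2)), (CB [1, 1, 1, -2, -2, -2, -1, -2, -2, -1])),
  (((-1), (-1)), (CB [-1, -2, -2, -2, -2, -2, 2, 2, 2])),
  (((-1), 0), (CB [-2, -2, -2, -1, 2, 1])),
  (((-1), 1), (CB [-2, -2, -1, -1, 2, 2, 1])),
  (((-1), 2), (CB [1, 2, 2, 2, -1, -1, -2, -2])),
  ((0, (-2)), (CB [-1, -1, -2, -2, -1, 2, 1])),
  ((0, (-1)), (CB [-1, -2, -2, -1, 2, 1])),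
  ((0, 0), (CB [-2, -2, -1, 2, 1])),
  ((0, 1), (CB [1, -2, -2, -1, 2, 1])),
  ((0, 2), (CB [1, 1, -2, -2, -1, 2, 1])),
  ((1, (-2)), (CB [-1, -2, -2, -2, -1, 2, 2, 1])),
  ((1, (-1)), (CB [-1, -2, -2, -1, 2, 2, 1])),
  ((1, 0), (CB [1, -2, -2, -2, -2, -2, 2, 2, 2, 2])),
  ((1, 1), (CB [-1, -1, -2, -2, -2, 2, 2, 2, 2, 2, 1])),
  ((1, 2), (CB [-1, -1, -2, -2, 1, 1, 1, 2, 1, 1])),
  ((2, (-2)), (CB [-1, -2, -2, -1, -1, 2, 2, 2, 1])),
  ((2, (-1)), (CB [-1, -2, -2, -1, 2, 2, 2, 1])),
  ((2, 0), (CB [-1, -2, -2, -2, -2, 2, 2, 2, 2, 2, 1])),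
  ((2, 1), (CB [-1, -2, -2, -2, 1, 1, 1, 2, 1, 1])),
  ((2, 2), (CB [-1, -2, -2, 1, 1, 2, 2, 2, 1]))]"

definition tabS2 :: "((int \<times> int) \<times> cert) list" where "tabS2 = [(((-2), (-2)), (CB [1, 2, 2, -1, -1, -2, -2, -2, -1])),
  (((-2), (-1)), (CB [-2, 1, 1, -2, -2, -1])),
  (((-2), 0), (CB [1, 1, -2, -2, -2, -2, -2, -1, -2, 1, 1, 1, 1])),
  (((-2), 1), (CB [-2, -2, -2, -2, 1, 1, 2, 1])),
  (((-2), 2), (CB [1, 2, 2, 1, 1, -2, -2, -2, -1])),
  (((-1), (-2)), (CB [1, -2, -2, -1, -1, 2])),
  (((-1), (-1)), (CB [1, 1, -2, -2, -2, -2, -2, 2, 2, 2, -1])),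
  (((-1), 0), (CB [-1, -2, -2, -2, -2, 2, 2, 2, 2, 2])),
  (((-1), 1), (CB [-2, -2, -2, 1, 1, 2, 1])),
  (((-1), 2), (CB [1, 1, 2, 1, 1, 1, -2, -2, -2, -1])),
  ((0, (-2)), (CB [-1, -1, -1, -2, -2, 1, 1, 2, 1])),
  ((0, (-1)), (CB [-1, -1, -2, -2, 1, 1, 2, 1])),
  ((0, 0), (CB [-1, -2, -2, 1, 1, 2, 1])),
  ((0, 1), (CB [-2, -2, 1, 1, 2, 1])),
  ((0, 2), (CB [1, -2, -2, 1, 1, 2, 1])),
  ((1, (-2)), (CB [-1, -2, -2, -2, 1, 1, 2, 2])),
  ((1, (-1)), (CB [-1, -2, -2, 1, 1, 2, 2])),
  ((1, 0), (CB [-1, -2, 1, 1, 2, 2])),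
  ((1, 1), (CB [1, -2, -2, -2, 2, 2, 2, 2, 2])),
  ((1, 2), (CB [-1, 2, 1, 1, 2, 2])),
  ((2, (-2)), (CB [2, 2, -1, -1, 2, -1, 2])),
  ((2, (-1)), (CB [2, 2, 2, 1, 1, -2, -2, -1])),
  ((2, 0), (CB [-1, -2, 1, 1, 1, 2, 2])),
  ((2, 1), (CB [1, 1, -2, -2, -2, -2, 2, 2, 2, 2, 2, 1])),
  ((2, 2), (CL [-1] 2 (-1) [1, 2, 2, 1, 1, 2, 2] 0 (CB [-1, 1, 2, 2, 1, 1, 2, 2]) (CB [-1, 1, 1, 2, 1, 1, 1, 2, 2]) (CB [-1, 1, 1, 1, 2, 1, 1, 2, 2, 2]) (CB [-1, 1, 1, 1, 1, 2, 1, 1, 2, 2, 1]) (CB [-1, -1, 2, 1, 1, 2, 2, 1, 1, 2, 1, 1, 1, 1])))]"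

lemma tabU_ok: "list_all (\<lambda>((b,c,d),cc). chk basU (pw 2 b @ pw 1 c @ pw 2 d) cc) tabU" by code_simp
lemma tabU_keys: "\<forall>b\<in>set [-2..2]. \<forall>c\<in>set [-2..2]. \<forall>d\<in>set [-2..2]. (b,c,d) \<in> fst ` set tabU" by code_simp
lemma tabS1_ok: "list_all (\<lambda>((k,j),cc). chk (basS [-2,-1,-1,-2,-2,-1,-1,-2] [-2,-2,1,1,-2,1,-2]) (pw 2 k @ pw 1 j @ [-2,1,-2]) cc) tabS1" by code_simp
lemma tabS1_keys: "\<forall>k\<in>set [-2..2]. \<forall>j\<in>set [-2..2]. (k,j) \<in> fst ` set tabS1" by code_simp
lemma tabS2_ok: "list_all (\<lambda>((k,j),cc). chk (basS [2,1,1,2,2,1,1,2] [2,2,-1,-1,2,-1,2]) (pw 2 k @ pw 1 j @ [2,-1,2]) cc) tabS2" by code_simp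
lemma tabS2_keys: "\<forall>k\<in>set [-2..2]. \<forall>j\<in>set [-2..2]. (k,j) \<in> fst ` set tabS2" by code_simp

lemma nfc: "nf ([2,1,1,2] @ [1]) = nf ([1] @ [2,1,1,2])" "nf ([2,1,1,2] @ [-1]) = nf ([-1] @ [2,1,1,2])"
  "nf ([-2,-1,-1,-2] @ [1]) = nf ([1] @ [-2,-1,-1,-2])" "nf ([-2,-1,-1,-2] @ [-1]) = nf ([-1] @ [-2,-1,-1,-2])"
  by code_simp+

lemma "nf [1,2,1,1,2] = nf [2,1,1,2,1]" by code_simp

locale h5 =
  fixes sc :: "'r::comm_ring_1 \<Rightarrow> 'a::ring_1 \<Rightarrow> 'a" and a b c d e :: 'r and s1 s2 t1 t2 :: 'a
  assumes H: "H5_setting sc a b c d e s1 s2 t1 t2"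
begin

lemma st1: "s1*t1 = 1" and ts1: "t1*s1 = 1" and st2: "s2*t2=1" and ts2: "t2*s2=1"
  and br: "s1*s2*s1 = s2*s1*s2"
  using H by (auto simp: H5_setting_def)

definition lt :: "int \<Rightarrow> 'a" where
 "lt x = (if x = 1 then s1 else if x = -1 then t1 else if x = 2 then s2 else if x = -2 then t2 else 1)"
definition ev :: "int list \<Rightarrow> 'a" where "ev w = prod_list (map lt w)"

lemma ev_simps[simp]: "ev [] = 1" "ev (x#w) = lt x * ev w" "ev (u@v) = ev u * ev v"
  by (auto simp: ev_def)

definition Dl where "Dl = s1*s2*s1"
definition Di where "Di = t1*t2*t1"

lemma Dl_s1: "Dl * s1 = s2 * Dl" unfolding Dl_def by (metis br mult.assoc)
lemma Dl_s2: "Dl * s2 = s1 * Dl" unfolding Dl_def by (metis br mult.assoc)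
lemma Dl_t1: "Dl * t1 = t2 * Dl"
proof -
  have "t2 * Dl = t2 * Dl * (s1 * t1)" by (simp add: st1)
  also have "\<dots> = t2 * (Dl * s1) * t1" by (simp add: mult.assoc)
  also have "\<dots> = Dl * t1" by (simp add: Dl_s1 mult.assoc[symmetric] ts2)
  finally show ?thesis by simp
qed
lemma Dl_t2: "Dl * t2 = t1 * Dl"
proof -
  have "t1 * Dl = t1 * Dl * (s2 * t2)" by (simp add: st2)
  also have "\<dots> = t1 * (Dl * s2) * t2" by (simp add: mult.assoc)
  also have "\<dots> = Dl * t2" by (simp add: Dl_s2 mult.assoc[symmetric] ts1)
  finally show ?thesis by simp
qed
lemma Dl_lt: "Dl * lt x = lt (ph x) * Dl"
  by (auto simp: lt_def ph_def Dl_s1 Dl_s2 Dl_t1 Dl_t2)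
lemma Dl_ev: "Dl * ev w = ev (map ph w) * Dl"
  by (induction w) (simp_all add: mult.assoc[symmetric] Dl_lt, simp add: mult.assoc)
lemma ph_ph: "ph (ph x) = x" by (simp add: ph_def)
lemma ev_Dl: "ev w * Dl = Dl * ev (map ph w)"
  using Dl_ev[of "map ph w"] by (simp add: comp_def ph_ph)
lemma DlDi: "Dl * Di = 1" unfolding Dl_def Di_def
  by (simp add: mult.assoc) (simp add: mult.assoc[symmetric] st1 st2)
lemma DiDl: "Di * Dl = 1" unfolding Dl_def Di_def
  by (simp add: mult.assoc) (simp add: mult.assoc[symmetric] ts1 ts2)

definition D :: "int \<Rightarrow> 'a" where "D k = (if 0 \<le> k then Dl ^ nat k else Di ^ nat (-k))"
lemma D_succ: "D (k+1) = D k * Dl"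
proof (cases "0 \<le> k")
  case True
  have "nat (k+1) = Suc (nat k)" using True by simp
  then show ?thesis using True by (simp add: D_def power_commutes)
next
  case False
  show ?thesis
  proof (cases "k = -1")
    case True then show ?thesis by (simp add: D_def DiDl)
  next
    case F2: False
    have a: "nat (-k) = Suc (nat (-(k+1)))" using False by simp
    have "\<not> 0 \<le> k+1" using False F2 by simp
    then have "D (k+1) = Di ^ nat (-(k+1))" by (simp add: D_def)
    moreover have "D k * Dl = Di ^ nat (-(k+1))"
    proof -
      have "D k = Di ^ Suc (nat (-(k+1)))" using False a by (simp add: D_def)
      then have "D k * Dl = Di ^ nat (-(k+1)) * (Di * Dl)" by (simp only: power_Suc2 mult.assoc)
      then show ?thesis by (simp add: DiDl)
    qed
    ultimately show ?thesis by simp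
  qed
qed

definition val :: "int \<times> int list \<Rightarrow> 'a" where "val s = D (fst s) * ev (rev (snd s))"

lemma lt121: "lt 1 * lt 2 * lt 1 = Dl" by (simp add: lt_def Dl_def)
lemma lt212: "lt 2 * lt 1 * lt 2 = Dl" by (simp add: lt_def Dl_def br[symmetric])
lemma lt_Dl: assumes "x \<in> {1,2}" "y \<in> {1,2}" "x \<noteq> y" shows "lt x * lt y * lt x = Dl"
proof -
  from assms have "(x = 1 \<and> y = 2) \<or> (x = 2 \<and> y = 1)" by auto
  then show ?thesis using lt121 lt212 by auto
qed

lemma val_push: "val (push s x) = val s * lt x"
proof -
  obtain k R where s: "s = (k,R)" by fastforce
  show ?thesis
  proof (cases "\<exists>y z r. R = y#z#r \<and> x = z \<and> x \<noteq> y \<and> x \<in> {1,2} \<and> y \<in> {1,2}")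
    case True
    then obtain y z r where R: "R = y#z#r" and c: "x = z" "x \<noteq> y" "x \<in> {1,2}" "y \<in> {1,2}" by blast
    have "val s * lt x = D k * ev (rev r) * (lt x * lt y * lt x)"
      using R c s by (simp add: val_def mult.assoc)
    also have "\<dots> = D k * (ev (rev r) * Dl)" using lt_Dl[OF c(3,4,2)] by (simp add: mult.assoc)
    also have "\<dots> = D (k+1) * ev (rev (map ph r))" by (simp add: ev_Dl D_succ mult.assoc rev_map)
    finally show ?thesis using R c s by (simp add: push_def val_def)
  next
    case False
    then have "push s x = (k, x#R)" using s
      by (auto simp: push_def split: list.split)
    then show ?thesis using s by (simp add: val_def mult.assoc)
  qed
qed

lemma Dl_t1': "Dl * t1 = s1 * s2" unfolding Dl_def by (simp add: mult.assoc st1)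
lemma Dl_t2': "Dl * t2 = s2 * s1"
proof -
  have e: "Dl = s2*s1*s2" by (simp add: Dl_def br)
  have "Dl * t2 = s2 * s1 * (s2 * t2)" unfolding e by (simp only: mult.assoc)
  then show ?thesis by (simp add: st2)
qed

lemma val_stp: "val (stp s x) = val s * lt x"
proof -
  obtain k R where s: "s = (k,R)" by fastforce
  have D1: "D k = D (k-1) * Dl" using D_succ[of "k-1"] by simp
  have key: "val s * lt x = D (k-1) * ev (rev (map ph R)) * (Dl * lt x)"
    using s by (simp add: val_def D1 mult.assoc Dl_ev rev_map)
  show ?thesis
  proof (cases "x = -1")
    case True
    have "stp s x = push (push (k-1, map ph R) 1) 2" using True s by (simp add: stp_def)
      then have "val (stp s x) = val (k-1, map ph R) * s1 * s2" by (simp add: val_push lt_def)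
      also have "\<dots> = D (k-1) * ev (rev (map ph R)) * (s1 * s2)" by (simp add: val_def mult.assoc)
      also have "\<dots> = val s * lt x" using key True Dl_t1' by (simp add: lt_def)
      finally show ?thesis .
  next
    case F1: False
    show ?thesis
    proof (cases "x = -2")
      case True
      have "stp s x = push (push (k-1, map ph R) 2) 1" using True s by (simp add: stp_def)
      then have "val (stp s x) = val (k-1, map ph R) * s2 * s1" by (simp add: val_push lt_def)
      also have "\<dots> = D (k-1) * ev (rev (map ph R)) * (s2 * s1)" by (simp add: val_def mult.assoc)
      also have "\<dots> = val s * lt x" using key True Dl_t2' by (simp add: lt_def)
      finally show ?thesis .
    next
      case False
      show ?thesis
      proof (cases "x = 1 \<or> x = 2")
        case True then show ?thesis by (simp add: stp_def val_push)
      next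
        case F3: False then show ?thesis using F1 False by (simp add: stp_def lt_def)
      qed
    qed
  qed
qed

lemma ev_nf: "val (nf w) = ev w"
proof (induction w rule: rev_induct)
  case Nil then show ?case by (simp add: nf_def val_def D_def)
next
  case (snoc x w)
  have "nf (w@[x]) = stp (nf w) x" by (simp add: nf_def)
  then show ?case using snoc by (simp add: val_stp)
qed

lemma nf_eq: "nf u = nf v \<Longrightarrow> ev u = ev v"
  by (metis ev_nf)

lemma alg: "is_algebra sc" using H by (simp add: H5_setting_def)
lemma M: "module sc" using alg by (simp add: is_algebra_def)
lemma scl: "sc r (x * y) = sc r x * y" using alg unfolding is_algebra_def by blast
lemma scr: "sc r (x * y) = x * sc r y" using alg unfolding is_algebra_def by blast

interpretation m: module sc by (rule M)

lemma lin_mid: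
  assumes x: "x \<in> m.span A" and V: "m.subspace V" and h: "\<And>a. a \<in> A \<Longrightarrow> p * a * q \<in> V"
  shows "p * x * q \<in> V"
  using x
proof (induction rule: m.span_induct_alt)
  case base then show ?case using V m.subspace_0 by simp
next
  case (step c x y)
  have aux: "sc c (p * x * q) = p * sc c x * q" by (metis scl scr)
  have "p * (sc c x + y) * q = sc c (p * x * q) + p * y * q"
    unfolding aux by (simp add: distrib_left distrib_right)
  then show ?case using step h V m.subspace_add m.subspace_scale by metis
qed

lemma lin_left: "x \<in> m.span A \<Longrightarrow> m.subspace V \<Longrightarrow> (\<And>a. a \<in> A \<Longrightarrow> a * q \<in> V) \<Longrightarrow> x * q \<in> V"
  using lin_mid[of x A V 1 q] by simp
lemma lin_right: "x \<in> m.span A \<Longrightarrow> m.subspace V \<Longrightarrow> (\<And>a. a \<in> A \<Longrightarrow> p * a \<in> V) \<Longrightarrow> p * x \<in> V"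
  using lin_mid[of x A V p 1] by simp

lemma mprod_mul:
  assumes x: "x \<in> mprod sc X Y" and V: "m.subspace V" and h: "\<And>a b. a \<in> X \<Longrightarrow> b \<in> Y \<Longrightarrow> a * b * z \<in> V"
  shows "x * z \<in> V"
  using x unfolding mprod_def by (rule lin_left[OF _ V]) (auto intro: h)

lemma mprod_sub: "m.subspace V \<Longrightarrow> (\<And>a b. a \<in> X \<Longrightarrow> b \<in> Y \<Longrightarrow> a * b \<in> V) \<Longrightarrow> mprod sc X Y \<subseteq> V"
  unfolding mprod_def by (rule m.span_minimal) auto

lemma mprod_in: "x \<in> X \<Longrightarrow> y \<in> Y \<Longrightarrow> x * y \<in> mprod sc X Y"
  unfolding mprod_def by (rule m.span_base) auto

lemma sub_mprod: "m.subspace (mprod sc X Y)" unfolding mprod_def by simp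

lemma sub_msum: "m.subspace X \<Longrightarrow> m.subspace Y \<Longrightarrow> m.subspace (msum X Y)"
  unfolding msum_def m.subspace_def
  apply (intro conjI)
    apply (metis (mono_tags, lifting) add.right_neutral mem_Collect_eq)
   apply clarsimp apply (metis (no_types, lifting) add.assoc add.commute)
  apply clarsimp apply (metis m.scale_right_distrib)
  done

lemma sub_foldr: "(\<forall>X\<in>set L. m.subspace X) \<Longrightarrow> m.subspace (foldr msum L {0})"
  by (induction L) (auto intro: sub_msum)

lemma in_msumL: "x \<in> X \<Longrightarrow> 0 \<in> Y \<Longrightarrow> x \<in> msum X Y"
proof -
  assume "x \<in> X" "0 \<in> Y"
  moreover have "x = x + 0" by simp
  ultimately show ?thesis unfolding msum_def by blast
qed
lemma in_msumR: "y \<in> Y \<Longrightarrow> 0 \<in> X \<Longrightarrow> y \<in> msum X Y"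
proof -
  assume "y \<in> Y" "0 \<in> X"
  moreover have "y = 0 + y" by simp
  ultimately show ?thesis unfolding msum_def by blast
qed

lemma in_foldr: "x \<in> X \<Longrightarrow> X \<in> set L \<Longrightarrow> (\<forall>Y\<in>set L. 0 \<in> Y) \<Longrightarrow> x \<in> foldr msum L {0}"
proof (induction L)
  case Nil then show ?case by simp
next
  case (Cons Y L)
  have z: "0 \<in> foldr msum L {0}" using Cons.prems(3)
    by (induction L) (simp_all add: in_msumL)
  show ?case
  proof (cases "X = Y")
    case True then show ?thesis using Cons.prems z by (simp add: in_msumL)
  next
    case False then have "x \<in> foldr msum L {0}" using Cons by auto
    then show ?thesis using Cons.prems by (simp add: in_msumR)
  qed
qed


lemma quint: "s \<in> {s1,s2} \<Longrightarrow> s ^ 5 = sc a (s ^ 4) + sc b (s ^ 3) + sc c (s ^ 2) + sc d s + sc e 1"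
  using H unfolding H5_setting_def by blast
lemma einv: "\<exists>e'. e * e' = 1" using H unfolding H5_setting_def by blast

lemma sc_mid: "x * sc r y * z = sc r (x * y * z)" by (metis scl scr)

lemma line_abs:
  fixes F :: "int \<Rightarrow> 'a"
  assumes V: "m.subspace V"
    and rec: "\<And>n. F (n+5) = sc a (F (n+4)) + sc b (F (n+3)) + sc c (F (n+2)) + sc d (F (n+1)) + sc e (F n)"
    and base: "\<And>j. mm \<le> j \<Longrightarrow> j \<le> mm+4 \<Longrightarrow> F j \<in> V"
  shows "F n \<in> V"
proof -
  obtain e' where e': "e * e' = 1" using einv by blast
  have up: "F (mm + int i) \<in> V" for i
  proof (induction i rule: less_induct)
    case (less i)
    show ?case
    proof (cases "i < 5")
      case True then show ?thesis using base by simp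
    next
      case False
      then obtain k where k: "i = k + 5" by (metis add.commute le_Suc_ex not_less)
      let ?n = "mm + int k"
      have i5: "mm + int i = ?n + 5" "mm + int (k+4) = ?n + 4" "mm + int (k+3) = ?n + 3" "mm + int (k+2) = ?n + 2"
         "mm + int (k+1) = ?n + 1" using k by auto
      have "F (mm + int i) = sc a (F (mm + int (k+4))) + sc b (F (mm + int (k+3))) + sc c (F (mm + int (k+2))) + sc d (F (mm + int (k+1))) + sc e (F (mm + int k))"
        unfolding i5 by (rule rec)
      moreover have "F (mm + int (k+4)) \<in> V" "F (mm + int (k+3)) \<in> V" "F (mm + int (k+2)) \<in> V" "F (mm + int (k+1)) \<in> V" "F (mm + int k) \<in> V"
        using less.IH[of "k+4"] less.IH[of "k+3"] less.IH[of "k+2"] less.IH[of "k+1"] less.IH[of "k"] k by auto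
      ultimately show ?thesis using V by (simp add: m.subspace_add m.subspace_scale)
    qed
  qed
  have down: "F (mm + 4 - int i) \<in> V" for i
  proof (induction i rule: less_induct)
    case (less i)
    show ?case
    proof (cases "i < 5")
      case True then show ?thesis using base by simp
    next
      case False
      then obtain k where k: "i = k + 5" by (metis add.commute le_Suc_ex not_less)
      let ?n = "mm + 4 - int i"
      have r: "F (?n+5) = sc a (F (?n+4)) + sc b (F (?n+3)) + sc c (F (?n+2)) + sc d (F (?n+1)) + sc e (F ?n)"
        by (rule rec)
      have "F ?n = sc e' (sc e (F ?n))" using e' by (simp add: mult.commute)
      also have "\<dots> = sc e' (F (?n+5) - sc a (F (?n+4)) - sc b (F (?n+3)) - sc c (F (?n+2)) - sc d (F (?n+1)))"
        using r by (simp add: algebra_simps)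
      finally have eq: "F ?n = \<dots>" .
      have i5: "?n + 5 = mm + 4 - int k" "?n + 4 = mm + 4 - int (k+1)" "?n + 3 = mm + 4 - int (k+2)"
        "?n + 2 = mm + 4 - int (k+3)" "?n + 1 = mm + 4 - int (k+4)" using k by auto
      have "F (?n+5) \<in> V" "F (?n+4) \<in> V" "F (?n+3) \<in> V" "F (?n+2) \<in> V" "F (?n+1) \<in> V"
        unfolding i5 using less.IH[of "k"] less.IH[of "k+1"] less.IH[of "k+2"] less.IH[of "k+3"] less.IH[of "k+4"] k by auto
      then show ?thesis unfolding eq using V by (simp add: m.subspace_diff m.subspace_scale)
    qed
  qed
  show ?thesis
  proof (cases "mm \<le> n")
    case True then show ?thesis using up[of "nat (n - mm)"] by simp
  next
    case False then show ?thesis using down[of "nat (mm + 4 - n)"] by simp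
  qed
qed

lemma ev_rep: "ev (replicate k x) = lt x ^ k" by (induction k) auto

lemma gp_succ: assumes g: "g = 1 \<or> g = 2" shows "ev (pw g (n+1)) = ev (pw g n) * lt g"
proof -
  have inv: "lt (-g) * lt g = 1" using g by (auto simp: lt_def ts1 ts2)
  show ?thesis
  proof (cases "0 \<le> n")
    case True
    then have "nat (n+1) = Suc (nat n)" by simp
    then show ?thesis using True by (simp add: pw_def ev_rep) (simp add: power_commutes)
  next
    case False
    show ?thesis
    proof (cases "n = -1")
      case True then show ?thesis using inv by (simp add: pw_def ev_rep)
    next
      case F2: False
      have e: "nat (-n) = Suc (nat (-(n+1)))" using False by simp
      have "ev (pw g n) = lt (-g) ^ nat (-(n+1)) * lt (-g)"
        using False unfolding pw_def by (simp add: ev_rep e) (simp add: power_commutes)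
      then have "ev (pw g n) * lt g = lt (-g) ^ nat (-(n+1)) * (lt (-g) * lt g)"
        by (simp add: mult.assoc)
      also have "\<dots> = ev (pw g (n+1))" using False F2 inv by (simp add: pw_def ev_rep)
      finally show ?thesis by simp
    qed
  qed
qed

lemma gp_add: "g = 1 \<or> g = 2 \<Longrightarrow> ev (pw g (n + int k)) = ev (pw g n) * lt g ^ k"
proof (induction k)
  case 0 then show ?case by simp
next
  case (Suc k)
  have e: "n + int (Suc k) = (n + int k) + 1" by simp
  have "ev (pw g (n + int (Suc k))) = ev (pw g ((n + int k) + 1))" by (simp only: e)
  also have "\<dots> = ev (pw g (n + int k)) * lt g" using gp_succ Suc.prems by blast
  also have "\<dots> = ev (pw g n) * lt g ^ k * lt g" using Suc by simp
  finally show ?case by (simp add: mult.assoc power_commutes)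
qed

lemma line:
  assumes g: "g = 1 \<or> g = 2" and V: "m.subspace V"
    and base: "\<And>j. mm \<le> j \<Longrightarrow> j \<le> mm+4 \<Longrightarrow> ev (u @ pw g j @ v) \<in> V"
  shows "ev (u @ pw g n @ v) \<in> V"
proof -
  define F where "F j = ev (u @ pw g j @ v)" for j
  have S: "lt g \<in> {s1,s2}" using g by (auto simp: lt_def)
  have q: "lt g ^ 5 = sc a (lt g ^ 4) + sc b (lt g ^ 3) + sc c (lt g ^ 2) + sc d (lt g) + sc e 1"
    by (rule quint[OF S])
  have rec: "F (n+5) = sc a (F (n+4)) + sc b (F (n+3)) + sc c (F (n+2)) + sc d (F (n+1)) + sc e (F n)" for n
  proof -
    have p: "\<And>k. ev (pw g (n + int k)) = ev (pw g n) * lt g ^ k" using gp_add[OF g] by blast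
    have "F (n+5) = ev u * ev (pw g n) * lt g ^ 5 * ev v" using p[of 5] by (simp add: F_def mult.assoc)
    also have "\<dots> = ev u * ev (pw g n) * (sc a (lt g ^ 4) + sc b (lt g ^ 3) + sc c (lt g ^ 2) + sc d (lt g) + sc e 1) * ev v"
      using q by simp
    also have "\<dots> = sc a (ev u * ev (pw g n) * lt g ^ 4 * ev v) + sc b (ev u * ev (pw g n) * lt g ^ 3 * ev v)
       + sc c (ev u * ev (pw g n) * lt g ^ 2 * ev v) + sc d (ev u * ev (pw g n) * lt g ^ 1 * ev v) + sc e (ev u * ev (pw g n) * lt g ^ 0 * ev v)"
      by (simp add: distrib_left distrib_right sc_mid)
    also have "\<dots> = sc a (F (n+4)) + sc b (F (n+3)) + sc c (F (n+2)) + sc d (F (n+1)) + sc e (F n)"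
      using p[of 4] p[of 3] p[of 2] p[of 1] p[of 0] by (simp add: F_def mult.assoc)
    finally show ?thesis .
  qed
  show ?thesis using line_abs[of V F mm n, OF V rec] base unfolding F_def by blast
qed

lemma chk_sound:
  assumes "chk bas w cc" and V: "m.subspace V" and hb: "\<And>w' p s. bas w' \<Longrightarrow> P p s \<Longrightarrow> ev (p @ w' @ s) \<in> V"
    and P: "P p s"
  shows "ev (p @ w @ s) \<in> V"
  using assms(1)
proof (induction cc arbitrary: w)
  case (CB w')
  then have "nf w = nf w'" by simp
  then have "ev w = ev w'" by (rule nf_eq)
  then show ?case using hb[of w' p s] CB P by simp
next
  case (CL u g n v m c0 c1 c2 c3 c4)
  have g: "g = 1 \<or> g = 2" using CL.prems by simp
  have "nf w = nf (u @ pw g n @ v)" using CL.prems by simp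
  then have ew: "ev w = ev (u @ pw g n @ v)" by (rule nf_eq)
  have base: "ev ((p @ u) @ pw g j @ (v @ s)) \<in> V" if "m \<le> j" "j \<le> m+4" for j
  proof -
    have e: "\<And>k. ev ((p @ u) @ pw g k @ (v @ s)) = ev (p @ (u @ pw g k @ v) @ s)" by simp
    have c: "chk bas (u @ pw g m @ v) c0" "chk bas (u @ pw g (m+1) @ v) c1" "chk bas (u @ pw g (m+2) @ v) c2"
      "chk bas (u @ pw g (m+3) @ v) c3" "chk bas (u @ pw g (m+4) @ v) c4" using CL.prems by simp_all
    have r: "ev (p @ (u @ pw g m @ v) @ s) \<in> V" "ev (p @ (u @ pw g (m+1) @ v) @ s) \<in> V"
      "ev (p @ (u @ pw g (m+2) @ v) @ s) \<in> V" "ev (p @ (u @ pw g (m+3) @ v) @ s) \<in> V"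
      "ev (p @ (u @ pw g (m+4) @ v) @ s) \<in> V"
      using CL.IH(1)[OF c(1)] CL.IH(2)[OF c(2)] CL.IH(3)[OF c(3)] CL.IH(4)[OF c(4)] CL.IH(5)[OF c(5)] by blast+
    have "j = m \<or> j = m+1 \<or> j = m+2 \<or> j = m+3 \<or> j = m+4" using that by auto
    then show ?thesis unfolding e using r by blast
  qed
  have "ev ((p @ u) @ pw g n @ (v @ s)) \<in> V" by (rule line[OF g V base])
  then show ?case using ew by (simp add: mult.assoc)
qed

lemma pow_in: "s ^ n \<in> ugen sc s" unfolding ugen_def by (rule m.span_base) auto

lemma ugen_mult: assumes x: "x \<in> ugen sc s" and y: "y \<in> ugen sc s" shows "x * y \<in> ugen sc s"
proof -
  have "x * y = 1 * x * y" by simp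
  moreover have "1 * x * y \<in> ugen sc s"
    using x unfolding ugen_def
  proof (rule lin_mid)
    show "m.subspace (m.span (range (\<lambda>n. s ^ n)))" by simp
    fix a assume "a \<in> range (\<lambda>n. s ^ n)"
    then obtain n where a: "a = s ^ n" by blast
    have "a * y \<in> ugen sc s" using y unfolding ugen_def
    proof (rule lin_right)
      show "m.subspace (m.span (range (\<lambda>n. s ^ n)))" by simp
      fix b assume "b \<in> range (\<lambda>n. s ^ n)"
      then obtain k where "b = s ^ k" by blast
      then show "a * b \<in> m.span (range (\<lambda>n. s ^ n))" using a by (simp add: power_add[symmetric] m.span_base)
    qed
    then show "1 * a * y \<in> m.span (range (\<lambda>n. s ^ n))" by (simp add: ugen_def)
  qed
  ultimately show ?thesis by simp
qed

lemma inv_in: assumes S: "s \<in> {s1,s2}" and st: "s * t = 1" shows "t \<in> ugen sc s"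
proof -
  obtain e' where e': "e * e' = 1" using einv by blast
  have q: "s ^ 5 = sc a (s ^ 4) + sc b (s ^ 3) + sc c (s ^ 2) + sc d s + sc e 1" by (rule quint[OF S])
  have pt: "s ^ Suc k * t = s ^ k" for k by (simp only: power_Suc2 mult.assoc st mult_1_right)
  have p5: "s ^ 5 * t = s ^ 4" using pt[of 4] by simp
  have p4: "s ^ 4 * t = s ^ 3" using pt[of 3] by simp
  have p3: "s ^ 3 * t = s ^ 2" using pt[of 2] by simp
  have p2: "s ^ 2 * t = s ^ 1" using pt[of 1] by (simp add: power2_eq_square)
  have sl: "\<And>r x. sc r x * t = sc r (x * t)" by (simp add: scl)
  have "s ^ 4 = s ^ 5 * t" using p5 by simp
  also have "\<dots> = sc a (s ^ 4 * t) + sc b (s ^ 3 * t) + sc c (s ^ 2 * t) + sc d (s * t) + sc e (1 * t)"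
    unfolding q by (simp only: distrib_right sl)
  also have "\<dots> = sc a (s ^ 3) + sc b (s ^ 2) + sc c (s ^ 1) + sc d (s ^ 0) + sc e t"
    by (simp only: p4 p3 p2 st power_0 mult_1_left)
  finally have "sc e t = s ^ 4 - sc a (s ^ 3) - sc b (s ^ 2) - sc c (s ^ 1) - sc d (s ^ 0)"
    by (simp add: eq_diff_eq)
  moreover have "s ^ 4 - sc a (s ^ 3) - sc b (s ^ 2) - sc c (s ^ 1) - sc d (s ^ 0) \<in> ugen sc s"
    unfolding ugen_def by (intro m.span_diff m.span_scale m.span_base rangeI)
  ultimately have "sc e' (sc e t) \<in> ugen sc s" unfolding ugen_def by (simp only: m.span_scale)
  moreover have "sc e' (sc e t) = t" using e' by (simp add: mult.commute)
  ultimately show ?thesis by simp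
qed

lemma one_in: "1 \<in> ugen sc s" using pow_in[of s 0] by simp

lemma ones_in: "list_all one L \<Longrightarrow> ev L \<in> ugen sc s1"
proof (induction L)
  case Nil then show ?case by (simp add: one_in)
next
  case (Cons x L)
  have "lt x \<in> ugen sc s1" using Cons.prems inv_in[of s1 t1] st1 pow_in[of s1 1] by (auto simp: one_def lt_def)
  then show ?case using Cons ugen_mult by simp
qed
lemma twos_in: "list_all two L \<Longrightarrow> ev L \<in> ugen sc s2"
proof (induction L)
  case Nil then show ?case by (simp add: one_in)
next
  case (Cons x L)
  have "lt x \<in> ugen sc s2" using Cons.prems inv_in[of s2 t2] st2 pow_in[of s2 1] by (auto simp: two_def lt_def)
  then show ?case using Cons ugen_mult by simp
qed

lemma comm1: assumes z: "z = [2,1,1,2] \<or> z = [-2,-1,-1,-2]" and x: "one x" shows "ev z * lt x = lt x * ev z"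
proof -
  have "ev (z @ [x]) = ev ([x] @ z)" using z x unfolding one_def
    by (elim disjE) (hypsubst, rule nf_eq, simp only: nfc)+
  then show ?thesis by simp
qed

lemma comm_ones: assumes z: "z = [2,1,1,2] \<or> z = [-2,-1,-1,-2]" shows "list_all one L \<Longrightarrow> ev z * ev L = ev L * ev z"
proof (induction L)
  case Nil then show ?case by simp
next
  case (Cons x L)
  have "ev z * ev (x#L) = (ev z * lt x) * ev L" by (simp add: mult.assoc)
  also have "\<dots> = lt x * (ev z * ev L)" using comm1[OF z] Cons.prems by (simp add: mult.assoc)
  also have "\<dots> = ev (x#L) * ev z" using Cons by (simp add: mult.assoc)
  finally show ?case .
qed

lemma sand_in: "P \<in> X \<Longrightarrow> Q \<in> Y \<Longrightarrow> P * x * Q \<in> sand sc X x Y"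
  unfolding sand_def by (intro mprod_in) auto

definition UL where "UL = (let u1 = ugen sc s1; u2 = ugen sc s2;
         w = s2 * s1^2 * s2; wi = t2 * t1^2 * t2;
         f = (\<lambda>x. sand sc u1 x u1)
     in [ mprod sc (mprod sc u1 u2) u1,
         mprod sc u1 {w},
         mprod sc u1 {wi},
         f (t2 * s1^2 * t2),
         f (s2 * t1^2 * s2),
         f (s2^2 * s1^2 * s2^2),
         f (t2^2 * t1^2 * t2^2),
         f (s2 * t1^2 * s2^2),
         f (t2 * s1^2 * t2^2),
         f (t2 * s1 * t2),
         f (s2 * t1 * s2),
         f (t2^2 * t1^2 * s2^2),
         f (s2^2 * s1^2 * t2^2),
         f (s2^2 * t1^2 * s2^2),
         f (t2^2 * s1^2 * t2^2),
         f (t2^2 * s1 * t2),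
         f (t2 * s1 * t2^2) ])"

lemma Uprime_UL: "Uprime sc s1 s2 t1 t2 = foldr msum UL {0}" by (simp add: Uprime_def UL_def Let_def)
lemma UL_zero: "\<forall>Y\<in>set UL. 0 \<in> Y" by (simp add: UL_def Let_def mprod_def sand_def m.span_zero)
lemma UL_sub: "\<forall>Y\<in>set UL. m.subspace Y" by (simp add: UL_def Let_def sand_def sub_mprod)
lemma UL_in: "x \<in> X \<Longrightarrow> X \<in> set UL \<Longrightarrow> x \<in> Uprime sc s1 s2 t1 t2"
  unfolding Uprime_UL using UL_zero in_foldr by blast
lemma Uprime_sub: "m.subspace (Uprime sc s1 s2 t1 t2)" unfolding Uprime_UL using UL_sub sub_foldr by blast

lemma genU: assumes G: "g \<in> set GU" and p: "list_all one p" and s: "list_all one s"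
  shows "ev p * ev g * ev s \<in> Uprime sc s1 s2 t1 t2"
proof -
  have "g = [2,1,1,2] \<or> g = [-2,-1,-1,-2] \<or> g = [-2,1,1,-2] \<or> g = [2,-1,-1,2] \<or> g = [2,2,1,1,2,2] \<or> g = [-2,-2,-1,-1,-2,-2] \<or> g = [2,-1,-1,2,2] \<or> g = [-2,1,1,-2,-2] \<or> g = [-2,1,-2] \<or> g = [2,-1,2] \<or> g = [-2,-2,-1,-1,2,2] \<or> g = [2,2,1,1,-2,-2] \<or> g = [2,2,-1,-1,2,2] \<or> g = [-2,-2,1,1,-2,-2] \<or> g = [-2,-2,1,-2] \<or> g = [-2,1,-2,-2]" using G by (simp add: GU_def)
  then show ?thesis
  proof (elim disjE)
    assume g: "g = [2,1,1,2]"
    have "ev p * ev g * ev s = (ev p * ev s) * ev g" using comm_ones[of g s] g p s by (simp add: mult.assoc)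
    moreover have "ev p * ev s \<in> ugen sc s1" using ones_in[OF p] ones_in[OF s] ugen_mult by blast
    moreover have "ev g = s2 * s1^2 * s2" using g by (simp add: lt_def power2_eq_square mult.assoc)
    ultimately have "ev p * ev g * ev s \<in> mprod sc (ugen sc s1) {s2 * s1^2 * s2}" by (simp add: mprod_in)
    then show ?thesis by (rule UL_in) (simp add: UL_def Let_def)
  next
    assume g: "g = [-2,-1,-1,-2]"
    have "ev p * ev g * ev s = (ev p * ev s) * ev g" using comm_ones[of g s] g p s by (simp add: mult.assoc)
    moreover have "ev p * ev s \<in> ugen sc s1" using ones_in[OF p] ones_in[OF s] ugen_mult by blast
    moreover have "ev g = t2 * t1^2 * t2" using g by (simp add: lt_def power2_eq_square mult.assoc)
    ultimately have "ev p * ev g * ev s \<in> mprod sc (ugen sc s1) {t2 * t1^2 * t2}" by (simp add: mprod_in)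
    then show ?thesis by (rule UL_in) (simp add: UL_def Let_def)
  next
    assume g: "g = [-2,1,1,-2]"
    have "ev g = t2 * s1^2 * t2" using g by (simp add: lt_def power2_eq_square mult.assoc)
    then have "ev p * ev g * ev s \<in> sand sc (ugen sc s1) (t2 * s1^2 * t2) (ugen sc s1)"
      using ones_in[OF p] ones_in[OF s] by (simp add: sand_in)
    then show ?thesis by (rule UL_in) (simp add: UL_def Let_def)
  next
    assume g: "g = [2,-1,-1,2]"
    have "ev g = s2 * t1^2 * s2" using g by (simp add: lt_def power2_eq_square mult.assoc)
    then have "ev p * ev g * ev s \<in> sand sc (ugen sc s1) (s2 * t1^2 * s2) (ugen sc s1)"
      using ones_in[OF p] ones_in[OF s] by (simp add: sand_in)
    then show ?thesis by (rule UL_in) (simp add: UL_def Let_def)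
  next
    assume g: "g = [2,2,1,1,2,2]"
    have "ev g = s2^2 * s1^2 * s2^2" using g by (simp add: lt_def power2_eq_square mult.assoc)
    then have "ev p * ev g * ev s \<in> sand sc (ugen sc s1) (s2^2 * s1^2 * s2^2) (ugen sc s1)"
      using ones_in[OF p] ones_in[OF s] by (simp add: sand_in)
    then show ?thesis by (rule UL_in) (simp add: UL_def Let_def)
  next
    assume g: "g = [-2,-2,-1,-1,-2,-2]"
    have "ev g = t2^2 * t1^2 * t2^2" using g by (simp add: lt_def power2_eq_square mult.assoc)
    then have "ev p * ev g * ev s \<in> sand sc (ugen sc s1) (t2^2 * t1^2 * t2^2) (ugen sc s1)"
      using ones_in[OF p] ones_in[OF s] by (simp add: sand_in)
    then show ?thesis by (rule UL_in) (simp add: UL_def Let_def)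
  next
    assume g: "g = [2,-1,-1,2,2]"
    have "ev g = s2 * t1^2 * s2^2" using g by (simp add: lt_def power2_eq_square mult.assoc)
    then have "ev p * ev g * ev s \<in> sand sc (ugen sc s1) (s2 * t1^2 * s2^2) (ugen sc s1)"
      using ones_in[OF p] ones_in[OF s] by (simp add: sand_in)
    then show ?thesis by (rule UL_in) (simp add: UL_def Let_def)
  next
    assume g: "g = [-2,1,1,-2,-2]"
    have "ev g = t2 * s1^2 * t2^2" using g by (simp add: lt_def power2_eq_square mult.assoc)
    then have "ev p * ev g * ev s \<in> sand sc (ugen sc s1) (t2 * s1^2 * t2^2) (ugen sc s1)"
      using ones_in[OF p] ones_in[OF s] by (simp add: sand_in)
    then show ?thesis by (rule UL_in) (simp add: UL_def Let_def)
  next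
    assume g: "g = [-2,1,-2]"
    have "ev g = t2 * s1 * t2" using g by (simp add: lt_def power2_eq_square mult.assoc)
    then have "ev p * ev g * ev s \<in> sand sc (ugen sc s1) (t2 * s1 * t2) (ugen sc s1)"
      using ones_in[OF p] ones_in[OF s] by (simp add: sand_in)
    then show ?thesis by (rule UL_in) (simp add: UL_def Let_def)
  next
    assume g: "g = [2,-1,2]"
    have "ev g = s2 * t1 * s2" using g by (simp add: lt_def power2_eq_square mult.assoc)
    then have "ev p * ev g * ev s \<in> sand sc (ugen sc s1) (s2 * t1 * s2) (ugen sc s1)"
      using ones_in[OF p] ones_in[OF s] by (simp add: sand_in)
    then show ?thesis by (rule UL_in) (simp add: UL_def Let_def)
  next
    assume g: "g = [-2,-2,-1,-1,2,2]"
    have "ev g = t2^2 * t1^2 * s2^2" using g by (simp add: lt_def power2_eq_square mult.assoc)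
    then have "ev p * ev g * ev s \<in> sand sc (ugen sc s1) (t2^2 * t1^2 * s2^2) (ugen sc s1)"
      using ones_in[OF p] ones_in[OF s] by (simp add: sand_in)
    then show ?thesis by (rule UL_in) (simp add: UL_def Let_def)
  next
    assume g: "g = [2,2,1,1,-2,-2]"
    have "ev g = s2^2 * s1^2 * t2^2" using g by (simp add: lt_def power2_eq_square mult.assoc)
    then have "ev p * ev g * ev s \<in> sand sc (ugen sc s1) (s2^2 * s1^2 * t2^2) (ugen sc s1)"
      using ones_in[OF p] ones_in[OF s] by (simp add: sand_in)
    then show ?thesis by (rule UL_in) (simp add: UL_def Let_def)
  next
    assume g: "g = [2,2,-1,-1,2,2]"
    have "ev g = s2^2 * t1^2 * s2^2" using g by (simp add: lt_def power2_eq_square mult.assoc)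
    then have "ev p * ev g * ev s \<in> sand sc (ugen sc s1) (s2^2 * t1^2 * s2^2) (ugen sc s1)"
      using ones_in[OF p] ones_in[OF s] by (simp add: sand_in)
    then show ?thesis by (rule UL_in) (simp add: UL_def Let_def)
  next
    assume g: "g = [-2,-2,1,1,-2,-2]"
    have "ev g = t2^2 * s1^2 * t2^2" using g by (simp add: lt_def power2_eq_square mult.assoc)
    then have "ev p * ev g * ev s \<in> sand sc (ugen sc s1) (t2^2 * s1^2 * t2^2) (ugen sc s1)"
      using ones_in[OF p] ones_in[OF s] by (simp add: sand_in)
    then show ?thesis by (rule UL_in) (simp add: UL_def Let_def)
  next
    assume g: "g = [-2,-2,1,-2]"
    have "ev g = t2^2 * s1 * t2" using g by (simp add: lt_def power2_eq_square mult.assoc)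
    then have "ev p * ev g * ev s \<in> sand sc (ugen sc s1) (t2^2 * s1 * t2) (ugen sc s1)"
      using ones_in[OF p] ones_in[OF s] by (simp add: sand_in)
    then show ?thesis by (rule UL_in) (simp add: UL_def Let_def)
  next
    assume g: "g = [-2,1,-2,-2]"
    have "ev g = t2 * s1 * t2^2" using g by (simp add: lt_def power2_eq_square mult.assoc)
    then have "ev p * ev g * ev s \<in> sand sc (ugen sc s1) (t2 * s1 * t2^2) (ugen sc s1)"
      using ones_in[OF p] ones_in[OF s] by (simp add: sand_in)
    then show ?thesis by (rule UL_in) (simp add: UL_def Let_def)
  qed
qed

lemma basU_in: assumes "basU w'" "list_all one p" "list_all one s" shows "ev (p @ w' @ s) \<in> Uprime sc s1 s2 t1 t2"
proof -
  obtain p' s' where sp: "w' = p' @ mid w' @ s'" "list_all one p'" "list_all one s'" using mid_split by blast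
  have pp: "list_all one (p @ p')" and ss: "list_all one (s' @ s)" using sp assms by auto
  have e: "ev (p @ w' @ s) = ev (p @ p') * ev (mid w') * ev (s' @ s)"
    by (subst sp(1)) (simp add: mult.assoc)
  show ?thesis
  proof (cases "mid w' \<in> set GU")
    case True then show ?thesis unfolding e using genU pp ss by blast
  next
    case False
    then have "list_all two (mid w')" using assms(1) by (simp add: basU_def)
    then have "ev (p @ p') * ev (mid w') * ev (s' @ s) \<in> mprod sc (mprod sc (ugen sc s1) (ugen sc s2)) (ugen sc s1)"
      using ones_in[OF pp] ones_in[OF ss] twos_in by (intro mprod_in) auto
    then show ?thesis unfolding e by (rule UL_in) (simp add: UL_def Let_def)
  qed
qed

lemma ones_pw: "list_all one (pw 1 n)" by (simp add: pw_def one_def list_all_iff)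

lemma U3: assumes "jb \<in> {-2..2}" "jc \<in> {-2..2}" "jd \<in> {-2..2}"
  shows "ev (pw 1 i @ pw 2 jb @ pw 1 jc @ pw 2 jd @ pw 1 k) \<in> Uprime sc s1 s2 t1 t2"
proof -
  have "(jb,jc,jd) \<in> fst ` set tabU" using tabU_keys assms unfolding set_upto by blast
  then obtain cc where "((jb,jc,jd),cc) \<in> set tabU" by force
  then have "chk basU (pw 2 jb @ pw 1 jc @ pw 2 jd) cc" using tabU_ok by (auto simp: list_all_iff)
  from chk_sound[OF this Uprime_sub, of "\<lambda>p s. list_all one p \<and> list_all one s" "pw 1 i" "pw 1 k"]
  show ?thesis using basU_in ones_pw by simp
qed

lemma U4: "ev (pw 1 i @ pw 2 jb @ pw 1 jc @ pw 2 jd @ pw 1 k) \<in> Uprime sc s1 s2 t1 t2"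
proof -
  have 1: "ev ((pw 1 i @ pw 2 jb @ pw 1 jc) @ pw 2 jd' @ pw 1 k) \<in> Uprime sc s1 s2 t1 t2"
    if "jb \<in> {-2..2}" "jc \<in> {-2..2}" for jb jc jd'
    by (rule line[where g=2 and mm="-2", OF _ Uprime_sub]) (use U3 that in auto)
  have 2: "ev ((pw 1 i @ pw 2 jb) @ pw 1 jc' @ (pw 2 jd @ pw 1 k)) \<in> Uprime sc s1 s2 t1 t2"
    if "jb \<in> {-2..2}" for jb jc'
    by (rule line[where g=1 and mm="-2", OF _ Uprime_sub]) (use 1 that in auto)
  have 3: "ev (pw 1 i @ pw 2 jb @ (pw 1 jc @ pw 2 jd @ pw 1 k)) \<in> Uprime sc s1 s2 t1 t2"
    by (rule line[where g=2 and mm="-2", OF _ Uprime_sub]) (use 2 in auto)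
  then show ?thesis by simp
qed
lemma lin_pow: "y \<in> ugen sc s \<Longrightarrow> m.subspace V \<Longrightarrow> (\<And>n. p * s^n * q \<in> V) \<Longrightarrow> p * y * q \<in> V"
  using lin_mid[of y "range (\<lambda>n. s^n)" V p q] by (auto simp: ugen_def)

lemma five_sub:
  assumes V: "m.subspace V" and h: "\<And>i1 i2 i3 i4 i5. s1^i1 * s2^i2 * s1^i3 * s2^i4 * s1^i5 \<in> V"
  shows "mprod sc (mprod sc (mprod sc (mprod sc (ugen sc s1) (ugen sc s2)) (ugen sc s1)) (ugen sc s2)) (ugen sc s1) \<subseteq> V"
proof -
  have core: "y1 * y2 * y3 * y4 * y5 \<in> V" if y: "y1 \<in> ugen sc s1" "y2 \<in> ugen sc s2" "y3 \<in> ugen sc s1" "y4 \<in> ugen sc s2" "y5 \<in> ugen sc s1"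
    for y1 y2 y3 y4 y5
  proof -
    have h5: "s1^i1 * s2^i2 * s1^i3 * s2^i4 * y5 \<in> V" for i1 i2 i3 i4
      using lin_pow[OF y(5) V, of "s1^i1 * s2^i2 * s1^i3 * s2^i4" 1] h by simp
    have h4: "s1^i1 * s2^i2 * s1^i3 * y4 * y5 \<in> V" for i1 i2 i3
      using lin_pow[OF y(4) V, of "s1^i1 * s2^i2 * s1^i3" y5] h5 by simp
    have h3: "s1^i1 * s2^i2 * y3 * (y4 * y5) \<in> V" for i1 i2
      using lin_pow[OF y(3) V, of "s1^i1 * s2^i2" "y4 * y5"] h4 by (simp add: mult.assoc)
    have h2: "s1^i1 * y2 * (y3 * y4 * y5) \<in> V" for i1
      using lin_pow[OF y(2) V, of "s1^i1" "y3 * y4 * y5"] h3 by (simp add: mult.assoc)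
    show ?thesis
      using lin_pow[OF y(1) V, of 1 "y2 * y3 * y4 * y5"] h2 by (simp add: mult.assoc)
  qed
  show ?thesis
  proof (rule mprod_sub[OF V])
    fix x y assume x: "x \<in> mprod sc (mprod sc (mprod sc (ugen sc s1) (ugen sc s2)) (ugen sc s1)) (ugen sc s2)"
      and y: "y \<in> ugen sc s1"
    show "x * y \<in> V"
    proof (rule mprod_mul[OF x V])
      fix x3 y4 assume x3: "x3 \<in> mprod sc (mprod sc (ugen sc s1) (ugen sc s2)) (ugen sc s1)" and y4: "y4 \<in> ugen sc s2"
      have "x3 * (y4 * y) \<in> V"
      proof (rule mprod_mul[OF x3 V])
        fix x2 y3 assume x2: "x2 \<in> mprod sc (ugen sc s1) (ugen sc s2)" and y3: "y3 \<in> ugen sc s1"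
        have "x2 * (y3 * (y4 * y)) \<in> V"
        proof (rule mprod_mul[OF x2 V])
          fix y1 y2 assume "y1 \<in> ugen sc s1" "y2 \<in> ugen sc s2"
          then show "y1 * y2 * (y3 * (y4 * y)) \<in> V" using core[of y1 y2 y3 y4 y] y3 y4 y by (simp add: mult.assoc)
        qed
        then show "x2 * y3 * (y4 * y) \<in> V" by (simp add: mult.assoc)
      qed
      then show "x3 * y4 * y \<in> V" by (simp add: mult.assoc)
    qed
  qed
qed

lemma ev_pwn: "ev (pw 1 (int n)) = s1 ^ n" "ev (pw 2 (int n)) = s2 ^ n"
  by (simp_all add: pw_def ev_rep lt_def)

lemma u5_sub: "mprod sc (mprod sc (mprod sc (mprod sc (ugen sc s1) (ugen sc s2)) (ugen sc s1)) (ugen sc s2)) (ugen sc s1) \<subseteq> Uprime sc s1 s2 t1 t2"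
proof (rule five_sub[OF Uprime_sub])
  fix i1 i2 i3 i4 i5 :: nat
  show "s1^i1 * s2^i2 * s1^i3 * s2^i4 * s1^i5 \<in> Uprime sc s1 s2 t1 t2"
    using U4[of "int i1" "int i2" "int i3" "int i4" "int i5"] by (simp add: ev_pwn mult.assoc)
qed

definition U5 where "U5 = mprod sc (mprod sc (mprod sc (mprod sc (ugen sc s1) (ugen sc s2)) (ugen sc s1)) (ugen sc s2)) (ugen sc s1)"

lemma pat2_in: "pat 2 w \<Longrightarrow> ev w \<in> U5"
proof -
  assume "pat 2 w"
  then obtain a1 b1 a2 b2 a3 where w: "w = a1 @ b1 @ a2 @ b2 @ a3" and
    l: "list_all one a1" "list_all two b1" "list_all one a2" "list_all two b2" "list_all one a3"
    using pat2_split[OF \<open>pat 2 w\<close>] by blast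
  have "ev a1 * ev b1 * ev a2 * ev b2 * ev a3 \<in> U5" unfolding U5_def
    by (rule mprod_in[OF mprod_in[OF mprod_in[OF mprod_in[OF ones_in[OF l(1)] twos_in[OF l(2)]] ones_in[OF l(3)]] twos_in[OF l(4)]] ones_in[OF l(5)]])
  then show ?thesis using w by (simp add: mult.assoc)
qed

lemma U5_sub: "m.subspace U5" unfolding U5_def by (rule sub_mprod)

lemma zero_foldr: "\<forall>Y\<in>set L. 0 \<in> Y \<Longrightarrow> (0::'a) \<in> foldr msum L {0}"
  by (induction L) (simp_all add: in_msumL)

lemma Spart1:
  fixes zz x y :: "int list"
  assumes zz: "zz = [2,1,1,2] \<or> zz = [-2,-1,-1,-2]"
    and T: "\<And>k j. k \<in> {-2..2} \<Longrightarrow> j \<in> {-2..2} \<Longrightarrow> \<exists>cc. chk (basS (zz@zz) x) (pw 2 k @ pw 1 j @ y) cc"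
  shows "mprod sc (mprod sc (ugen sc s2) (ugen sc s1)) {ev y} \<subseteq> msum (msum (mprod sc (ugen sc s1) {ev (zz@zz)}) (m.span {ev x})) U5"
proof -
  let ?S = "msum (msum (mprod sc (ugen sc s1) {ev (zz@zz)}) (m.span {ev x})) U5"
  have S: "m.subspace ?S" by (intro sub_msum sub_mprod U5_sub m.subspace_span)
  have z1: "0 \<in> mprod sc (ugen sc s1) {ev (zz@zz)}" by (simp add: mprod_def m.span_zero)
  have z2: "0 \<in> m.span {ev x}" by (simp add: m.span_zero)
  have z3: "0 \<in> U5" by (simp add: U5_def mprod_def m.span_zero)
  have z12: "0 \<in> msum (mprod sc (ugen sc s1) {ev (zz@zz)}) (m.span {ev x})" using z1 z2 by (rule in_msumL)
  have hb: "ev ([] @ w' @ []) \<in> ?S" if "basS (zz@zz) x w'" for w'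
  proof -
    have "pat 2 w' \<or> mid w' = zz@zz \<or> w' = x" using that by (simp add: basS_def)
    then show ?thesis
    proof (elim disjE)
      assume "pat 2 w'" then show ?thesis using pat2_in z12 by (simp add: in_msumR)
    next
      assume m: "mid w' = zz@zz"
      obtain p' s' where sp: "w' = p' @ mid w' @ s'" "list_all one p'" "list_all one s'" using mid_split by blast
      have "w' = p' @ zz @ zz @ s'" using sp(1) m by simp
      then have "ev w' = ev p' * ev zz * ev zz * ev s'" by (simp add: mult.assoc)
      also have "\<dots> = ev p' * ev s' * (ev zz * ev zz)"
      proof -
        have c: "ev zz * ev s' = ev s' * ev zz" using comm_ones[OF zz sp(3)] .
        have "ev p' * ev zz * ev zz * ev s' = ev p' * ev zz * (ev zz * ev s')" by (simp only: mult.assoc)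
        also have "\<dots> = ev p' * ev zz * (ev s' * ev zz)" by (simp only: c)
        also have "\<dots> = ev p' * (ev zz * ev s') * ev zz" by (simp only: mult.assoc)
        also have "\<dots> = ev p' * (ev s' * ev zz) * ev zz" by (simp only: c)
        also have "\<dots> = ev p' * ev s' * (ev zz * ev zz)" by (simp only: mult.assoc)
        finally show ?thesis .
      qed
      finally have "ev w' \<in> mprod sc (ugen sc s1) {ev (zz@zz)}"
        using ones_in[OF sp(2)] ones_in[OF sp(3)] ugen_mult by (simp add: mprod_in)
      then show ?thesis using z2 z3 by (simp add: in_msumL)
    next
      assume "w' = x"
      then have "ev w' \<in> m.span {ev x}" by (simp add: m.span_base)
      then show ?thesis using z1 z3 by (simp add: in_msumL in_msumR)
    qed
  qed
  have base: "ev (pw 2 k @ pw 1 j @ y) \<in> ?S" if kj: "k \<in> {-2..2}" "j \<in> {-2..2}" for k j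
  proof -
    obtain cc where "chk (basS (zz@zz) x) (pw 2 k @ pw 1 j @ y) cc" using T[OF kj] by blast
    from chk_sound[OF this S, of "\<lambda>p s. p = [] \<and> s = []" "[]" "[]"] hb show ?thesis by simp
  qed
  have b2: "ev (pw 2 k @ pw 1 j @ y) \<in> ?S" if kk: "k \<in> {-2..2}" for k j
  proof (rule line[where g=1 and mm="-2" and u="pw 2 k" and v=y and n=j, OF _ S])
    show "(1::int) = 1 \<or> (1::int) = 2" by simp
    fix j' :: int assume "-2 \<le> j'" "j' \<le> -2+4"
    then show "ev (pw 2 k @ pw 1 j' @ y) \<in> ?S" using base[OF kk, of j'] by simp
  qed
  have all: "ev (pw 2 k @ pw 1 j @ y) \<in> ?S" for k j
  proof -
    have "ev ([] @ pw 2 k @ (pw 1 j @ y)) \<in> ?S"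
    proof (rule line[where g=2 and mm="-2" and u="[]" and v="pw 1 j @ y" and n=k, OF _ S])
      show "(2::int) = 1 \<or> (2::int) = 2" by simp
      fix k' :: int assume "-2 \<le> k'" "k' \<le> -2+4"
      then show "ev ([] @ pw 2 k' @ (pw 1 j @ y)) \<in> ?S" using b2[of k' j] by simp
    qed
    then show ?thesis by simp
  qed
  show ?thesis
  proof (rule mprod_sub[OF S])
    fix q r assume q: "q \<in> mprod sc (ugen sc s2) (ugen sc s1)" and r: "r \<in> {ev y}"
    show "q * r \<in> ?S"
    proof (rule mprod_mul[OF q S])
      fix a' b' assume a': "a' \<in> ugen sc s2" and b': "b' \<in> ugen sc s1"
      have "1 * a' * (b' * r) \<in> ?S"
      proof (rule lin_pow[OF a' S])
        fix n
        have "s2 ^ n * b' * r \<in> ?S"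
        proof (rule lin_pow[OF b' S])
          fix k
          show "s2 ^ n * s1 ^ k * r \<in> ?S" using all[of "int n" "int k"] r by (simp add: ev_pwn mult.assoc)
        qed
        then show "1 * s2 ^ n * (b' * r) \<in> ?S" by (simp add: mult.assoc)
      qed
      then show "a' * b' * r \<in> ?S" by (simp add: mult.assoc)
    qed
  qed
qed

definition UDL where "UDL = (let u1 = ugen sc s1;
         w = s2 * s1^2 * s2; wi = t2 * t1^2 * t2;
         f = (\<lambda>x. sand sc u1 x u1)
     in [ Uprime sc s1 s2 t1 t2,
         mprod sc u1 {w^2},
         mprod sc u1 {wi^2},
         f (t2^2 * s1^2 * t2 * s1 * t2),
         f (s2^2 * t1^2 * s2 * t1 * s2),
         f (s2 * t1^2 * s2^2 * t1^2 * s2^2),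
         f (t2 * s1^2 * t2^2 * s1^2 * t2^2) ])"

lemma Ud_UDL: "Udprime sc s1 s2 t1 t2 = foldr msum UDL {0}" by (simp add: Udprime_def UDL_def Let_def)
lemma UDL_zero: "\<forall>Y\<in>set UDL. 0 \<in> Y"
  using zero_foldr[OF UL_zero] by (simp add: UDL_def Let_def mprod_def sand_def m.span_zero Uprime_UL)
lemma UDL_sub: "\<forall>Y\<in>set UDL. m.subspace Y" using Uprime_sub by (simp add: UDL_def Let_def sand_def sub_mprod)
lemma UDL_in: "x \<in> X \<Longrightarrow> X \<in> set UDL \<Longrightarrow> x \<in> Udprime sc s1 s2 t1 t2"
  unfolding Ud_UDL using UDL_zero in_foldr by blast
lemma Ud_sub: "m.subspace (Udprime sc s1 s2 t1 t2)" unfolding Ud_UDL using UDL_sub sub_foldr by blast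

lemma Spart2:
  assumes A: "mprod sc (ugen sc s1) {Z} \<in> set UDL" and X: "sand sc (ugen sc s1) X (ugen sc s1) \<in> set UDL"
  shows "msum (msum (mprod sc (ugen sc s1) {Z}) (m.span {X})) U5 \<subseteq> Udprime sc s1 s2 t1 t2"
proof
  fix v assume "v \<in> msum (msum (mprod sc (ugen sc s1) {Z}) (m.span {X})) U5"
  then obtain p q r where v: "v = p + q + r" and p: "p \<in> mprod sc (ugen sc s1) {Z}" and q: "q \<in> m.span {X}" and r: "r \<in> U5"
    unfolding msum_def by blast
  have "p \<in> Udprime sc s1 s2 t1 t2" using p A by (rule UDL_in)
  moreover have "q \<in> Udprime sc s1 s2 t1 t2"
  proof -
    have "X \<in> sand sc (ugen sc s1) X (ugen sc s1)" using sand_in[OF one_in one_in, of X] by simp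
    then have "m.span {X} \<subseteq> sand sc (ugen sc s1) X (ugen sc s1)"
      by (intro m.span_minimal) (auto simp: sand_def sub_mprod)
    then show ?thesis using q X by (blast intro: UDL_in)
  qed
  moreover have "r \<in> Udprime sc s1 s2 t1 t2"
  proof -
    have "r \<in> Uprime sc s1 s2 t1 t2" using r u5_sub unfolding U5_def by blast
    then show ?thesis by (rule UDL_in) (simp add: UDL_def Let_def)
  qed
  ultimately show "v \<in> Udprime sc s1 s2 t1 t2" unfolding v using Ud_sub by (intro m.subspace_add) auto
qed
end

theorem proposition4p4:
  fixes sc :: "'r::comm_ring_1 \<Rightarrow> 'a::ring_1 \<Rightarrow> 'a"
    and a b c d e :: 'r and s1 s2 t1 t2 :: 'a
  assumes "H5_setting sc a b c d e s1 s2 t1 t2"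
  defines "u1 \<equiv> ugen sc s1" and "u2 \<equiv> ugen sc s2"
    and "u12121 \<equiv> mprod sc (mprod sc (mprod sc (mprod sc (ugen sc s1) (ugen sc s2)) (ugen sc s1)) (ugen sc s2)) (ugen sc s1)"
    and "wi \<equiv> t2 * t1^2 * t2" and "w \<equiv> s2 * s1^2 * s2"
  shows "mprod sc (mprod sc u2 u1) {t2 * s1 * t2}
           \<subseteq> msum (msum (mprod sc u1 {wi^2}) (module.span sc {t2^2 * s1^2 * t2 * s1 * t2})) u12121
       \<and> msum (msum (mprod sc u1 {wi^2}) (module.span sc {t2^2 * s1^2 * t2 * s1 * t2})) u12121
           \<subseteq> Udprime sc s1 s2 t1 t2
       \<and> mprod sc (mprod sc u2 u1) {s2 * t1 * s2}
           \<subseteq> msum (msum (mprod sc u1 {w^2}) (module.span sc {s2^2 * t1^2 * s2 * t1 * s2})) u12121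
       \<and> msum (msum (mprod sc u1 {w^2}) (module.span sc {s2^2 * t1^2 * s2 * t1 * s2})) u12121
           \<subseteq> Udprime sc s1 s2 t1 t2"
proof -
  interpret h5 sc a b c d e s1 s2 t1 t2 by (rule h5.intro) (rule assms(1))
  have U5e: "u12121 = U5" unfolding u12121_def U5_def ..
  have ey1: "ev [-2,1,-2] = t2 * s1 * t2" by (simp add: lt_def mult.assoc)
  have ex1: "ev [-2,-2,1,1,-2,1,-2] = t2^2 * s1^2 * t2 * s1 * t2" by (simp add: lt_def power2_eq_square mult.assoc)
  have ez1: "ev ([-2,-1,-1,-2] @ [-2,-1,-1,-2]) = wi^2" unfolding wi_def by (simp add: lt_def power2_eq_square mult.assoc)
  have ey2: "ev [2,-1,2] = s2 * t1 * s2" by (simp add: lt_def mult.assoc)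
  have ex2: "ev [2,2,-1,-1,2,-1,2] = s2^2 * t1^2 * s2 * t1 * s2" by (simp add: lt_def power2_eq_square mult.assoc)
  have ez2: "ev ([2,1,1,2] @ [2,1,1,2]) = w^2" unfolding w_def by (simp add: lt_def power2_eq_square mult.assoc)
  have T1: "\<exists>cc. chk (basS ([-2,-1,-1,-2] @ [-2,-1,-1,-2]) [-2,-2,1,1,-2,1,-2]) (pw 2 k @ pw 1 j @ [-2,1,-2]) cc"
    if "k \<in> {-2..2}" "j \<in> {-2..2}" for k j
  proof -
    have "(k,j) \<in> fst ` set tabS1" using tabS1_keys that unfolding set_upto by blast
    then obtain cc where "((k,j),cc) \<in> set tabS1" by force
    then show ?thesis using tabS1_ok by (auto simp: list_all_iff)
  qed
  have T2: "\<exists>cc. chk (basS ([2,1,1,2] @ [2,1,1,2]) [2,2,-1,-1,2,-1,2]) (pw 2 k @ pw 1 j @ [2,-1,2]) cc"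
    if "k \<in> {-2..2}" "j \<in> {-2..2}" for k j
  proof -
    have "(k,j) \<in> fst ` set tabS2" using tabS2_keys that unfolding set_upto by blast
    then obtain cc where "((k,j),cc) \<in> set tabS2" by force
    then show ?thesis using tabS2_ok by (auto simp: list_all_iff)
  qed
  have A1: "mprod sc (mprod sc u2 u1) {t2 * s1 * t2}
           \<subseteq> msum (msum (mprod sc u1 {wi^2}) (module.span sc {t2^2 * s1^2 * t2 * s1 * t2})) u12121"
    using Spart1[of "[-2,-1,-1,-2]" "[-2,-2,1,1,-2,1,-2]" "[-2,1,-2]"] T1
    unfolding U5e u1_def u2_def ey1 ex1 ez1 by auto
  have A3: "mprod sc (mprod sc u2 u1) {s2 * t1 * s2}
           \<subseteq> msum (msum (mprod sc u1 {w^2}) (module.span sc {s2^2 * t1^2 * s2 * t1 * s2})) u12121"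
    using Spart1[of "[2,1,1,2]" "[2,2,-1,-1,2,-1,2]" "[2,-1,2]"] T2
    unfolding U5e u1_def u2_def ey2 ex2 ez2 by auto
  have A2: "msum (msum (mprod sc u1 {wi^2}) (module.span sc {t2^2 * s1^2 * t2 * s1 * t2})) u12121
           \<subseteq> Udprime sc s1 s2 t1 t2"
    unfolding U5e u1_def wi_def by (rule Spart2) (simp_all add: UDL_def Let_def)
  have A4: "msum (msum (mprod sc u1 {w^2}) (module.span sc {s2^2 * t1^2 * s2 * t1 * s2})) u12121
           \<subseteq> Udprime sc s1 s2 t1 t2"
    unfolding U5e u1_def w_def by (rule Spart2) (simp_all add: UDL_def Let_def)
  show ?thesis using A1 A2 A3 A4 by blast
qed

end
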